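(* Let $Y\in\mathbb{R}$, $Z\in\mathbb{R}^p$, $X=(X^{(1)},\dots,X^{(d)})\in\mathbb{R}^d$, $W\in\mathbb{R}^d$ be random variables/vectors with finite second moments; let $(\alpha,\beta_Z,\beta_X)=\arg\min_{a,b_Z,b_X}\mathbb{E}\big[\tfrac12(Y-a-Z^{\mathsf T}b_Z-X^{\mathsf T}b_X)^2\big]$. Let $(Y_i,Z_i,X_i,W_i)_{i=1}^N$ be samples satisfying: (i) they are identically distributed with the law of $(Y,Z,X,W)$ and their sample first and second moments converge in probability to the population moments as $N\to\infty$; (ii) $\varepsilon_i=Y_i-\alpha-Z_i^{\mathsf T}\beta_Z-X_i^{\mathsf T}\beta_X$ is uncorrelated with $W_i-X_i$; (iii) the covariance matrices of $(Z,W)$ and of $(Z,X)$ are positive definite. Let $\hat\beta_X^{(\mathrm{ME})}$ be the OLS coefficients of $W_i$ in the regression of $Y_i$ on an intercept, $Z_i$ and $W_i$, and $\mathrm{bias}^{(\mathrm{ME})}_{\beta_X}=\operatorname{plim}_{N\to\infty}(\hat\beta_X^{(\mathrm{ME})}-\beta_X)$. Suppose the entries of $X$ are exactly the pollutant concentrations, and assume: (Pairwise Partial $\mathrm{PC}_+$) for every $j\ne j'$, the partial correlation of $X^{(j)}$ and $X^{(j')}$ given all remaining entries of $(Z,X)$ is positive; (CUME) $W=X+E$ with $E$ independent of $(Z,X,Y)$ and $\mathrm{Cov}(E)=\mathrm{diag}(a_1,\dots,a_d)$, $a_j\ge0$; (No Benefit) $\beta_{X,j}\le 0$ for all $j$.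 If $\beta_{X,j}=0$ for some $j$, then $\big[\mathrm{bias}^{(\mathrm{ME})}_{\beta_X}\big]_j\le 0$.
   Context: Partial correlation of two entries of a random vector given other entries is the correlation of their population linear-regression residuals on those other entries. "plim" denotes limit in probability. *)

theory Defs
  imports "HOL-Probability.Probability"
begin

definition vcat :: "real^'m \<Rightarrow> real^'n \<Rightarrow> real^('m + 'n)" where
  "vcat x y = (\<chi> k. case k of Inl i \<Rightarrow> x $ i | Inr j \<Rightarrow> y $ j)"

definition rcov :: "'a measure \<Rightarrow> ('a \<Rightarrow> real) \<Rightarrow> ('a \<Rightarrow> real) \<Rightarrow> real" where
  "rcov M U V = (\<integral>\<omega>. U \<omega> * V \<omega> \<partial>M) - (\<integral>\<omega>. U \<omega> \<partial>M) * (\<integral>\<omega>. V \<omega> \<partial>M)"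

definition rcorr :: "'a measure \<Rightarrow> ('a \<Rightarrow> real) \<Rightarrow> ('a \<Rightarrow> real) \<Rightarrow> real" where
  "rcorr M U V = rcov M U V / sqrt (rcov M U U * rcov M V V)"

definition cov_mat :: "'a measure \<Rightarrow> ('a \<Rightarrow> real^'k) \<Rightarrow> real^'k^'k" where
  "cov_mat M V = (\<chi> i j. rcov M (\<lambda>\<omega>. V \<omega> $ i) (\<lambda>\<omega>. V \<omega> $ j))"

definition pos_def_mat :: "real^'k^'k \<Rightarrow> bool" where
  "pos_def_mat A \<longleftrightarrow> (\<forall>v. v \<noteq> 0 \<longrightarrow> v \<bullet> (A *v v) > 0)"

definition is_lin_resid ::
  "'a measure \<Rightarrow> 'k set \<Rightarrow> ('k \<Rightarrow> 'a \<Rightarrow> real) \<Rightarrow> ('a \<Rightarrow> real) \<Rightarrow> ('a \<Rightarrow> real) \<Rightarrow> bool" where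
  "is_lin_resid M K C U r \<longleftrightarrow>
     (\<exists>a c. r = (\<lambda>\<omega>. U \<omega> - a - (\<Sum>k\<in>K. c k * C k \<omega>)) \<and>
        (\<forall>a' c'. (\<integral>\<omega>. (U \<omega> - a - (\<Sum>k\<in>K. c k * C k \<omega>))^2 \<partial>M)
               \<le> (\<integral>\<omega>. (U \<omega> - a' - (\<Sum>k\<in>K. c' k * C k \<omega>))^2 \<partial>M)))"

definition lin_resid ::
  "'a measure \<Rightarrow> 'k set \<Rightarrow> ('k \<Rightarrow> 'a \<Rightarrow> real) \<Rightarrow> ('a \<Rightarrow> real) \<Rightarrow> ('a \<Rightarrow> real)" where
  "lin_resid M K C U = (SOME r. is_lin_resid M K C U r)"

definition partial_corr ::
  "'a measure \<Rightarrow> 'k set \<Rightarrow> ('k \<Rightarrow> 'a \<Rightarrow> real) \<Rightarrow> ('a \<Rightarrow> real) \<Rightarrow> ('a \<Rightarrow> real) \<Rightarrow> real" where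
  "partial_corr M K C U V = rcorr M (lin_resid M K C U) (lin_resid M K C V)"

definition conv_in_prob :: "'a measure \<Rightarrow> (nat \<Rightarrow> 'a \<Rightarrow> 'b::metric_space) \<Rightarrow> 'b \<Rightarrow> bool" where
  "conv_in_prob M Xs c \<longleftrightarrow> (\<forall>n. Xs n \<in> borel_measurable M) \<and>
     (\<forall>e>0. (\<lambda>n. measure M {\<omega> \<in> space M. dist (Xs n \<omega>) c > e}) \<longlonglongrightarrow> 0)"

definition outer_prod :: "real^'k \<Rightarrow> real^'k^'k" where
  "outer_prod x = (\<chi> i j. x $ i * x $ j)"

text \<open>OLS coefficients of the regression of y_i on the regressor vectors R_i, i < N
  (set to 0 if the Gram matrix is singular).\<close>
definition ols_coef :: "(nat \<Rightarrow> real^'k) \<Rightarrow> (nat \<Rightarrow> real) \<Rightarrow> nat \<Rightarrow> real^'k" where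
  "ols_coef R y N =
     (let G = (\<Sum>i<N. outer_prod (R i)); r = (\<Sum>i<N. y i *\<^sub>R R i)
      in if invertible G then matrix_inv G *v r else 0)"

text \<open>Coordinate functionals of a data point (Y,Z,X,W).\<close>
definition coord_funs :: "(real \<times> (real^'p) \<times> (real^'d) \<times> (real^'d) \<Rightarrow> real) set" where
  "coord_funs = {fst} \<union> range (\<lambda>j t. fst (snd t) $ j) \<union> range (\<lambda>j t. fst (snd (snd t)) $ j)
      \<union> range (\<lambda>j t. snd (snd (snd t)) $ j)"

text \<open>Independence of two random variables (possibly with different codomains),
  stated on events of the Borel sigma-algebras.\<close>
definition indep_rv :: "'a measure \<Rightarrow> ('a \<Rightarrow> 'b::topological_space) \<Rightarrow> ('a \<Rightarrow> 'c::topological_space) \<Rightarrow> bool" where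
  "indep_rv M U V \<longleftrightarrow> U \<in> borel_measurable M \<and> V \<in> borel_measurable M \<and>
     (\<forall>A\<in>sets borel. \<forall>B\<in>sets borel.
        measure M (U -` A \<inter> V -` B \<inter> space M) =
        measure M (U -` A \<inter> space M) * measure M (V -` B \<inter> space M))"

end

theory Submission
  imports Defs
begin

lemma meas_dist_gt:
  fixes f :: "'a \<Rightarrow> 'b::metric_space"
  assumes "f \<in> borel_measurable M"
  shows "{\<omega> \<in> space M. dist (f \<omega>) c > e} \<in> sets M"
proof -
  have "(\<lambda>\<omega>. dist (f \<omega>) c) \<in> borel_measurable M"
    using borel_measurable_continuous_on[OF _ assms, of "\<lambda>x. dist x c"]
    by (simp add: continuous_on_dist continuous_on_id continuous_on_const)
  then show ?thesis by measurable
qed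

lemma cip_bound:
  fixes X :: "nat \<Rightarrow> 'a \<Rightarrow> 'b::metric_space" and Y :: "'i \<Rightarrow> nat \<Rightarrow> 'a \<Rightarrow> 'c::metric_space"
  assumes P: "prob_space M" and I: "finite I"
    and Xm: "\<And>n. X n \<in> borel_measurable M"
    and Yc: "\<And>i. i \<in> I \<Longrightarrow> conv_in_prob M (Y i) (c i)"
    and b: "\<And>n \<omega>. \<omega> \<in> space M \<Longrightarrow> dist (X n \<omega>) x \<le> (\<Sum>i\<in>I. dist (Y i n \<omega>) (c i))"
  shows "conv_in_prob M X x"
  unfolding conv_in_prob_def
proof (intro conjI allI impI)
  interpret prob_space M by fact
  show "X n \<in> borel_measurable M" for n by fact
  fix e :: real assume e: "e > 0"
  define d where "d = e / (real (card I) + 1)"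
  have d: "d > 0" using e by (simp add: d_def)
  have cd: "real (card I) * d < e"
    using e unfolding d_def by (simp add: field_simps)
  have Ym: "Y i n \<in> borel_measurable M" if "i \<in> I" for i n
    using Yc[OF that] unfolding conv_in_prob_def by blast
  have sub: "{\<omega> \<in> space M. dist (X n \<omega>) x > e} \<subseteq> (\<Union>i\<in>I. {\<omega> \<in> space M. dist (Y i n \<omega>) (c i) > d})" for n
  proof
    fix \<omega> assume w: "\<omega> \<in> {\<omega> \<in> space M. dist (X n \<omega>) x > e}"
    show "\<omega> \<in> (\<Union>i\<in>I. {\<omega> \<in> space M. dist (Y i n \<omega>) (c i) > d})"
    proof (rule ccontr)
      assume "\<omega> \<notin> (\<Union>i\<in>I. {\<omega> \<in> space M. dist (Y i n \<omega>) (c i) > d})"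
      then have "\<forall>i\<in>I. dist (Y i n \<omega>) (c i) \<le> d" using w by auto
      then have "(\<Sum>i\<in>I. dist (Y i n \<omega>) (c i)) \<le> (\<Sum>i\<in>I. d)" by (intro sum_mono) auto
      then have "(\<Sum>i\<in>I. dist (Y i n \<omega>) (c i)) < e" using cd by simp
      then show False using b[of \<omega> n] w by auto
    qed
  qed
  have le: "measure M {\<omega> \<in> space M. dist (X n \<omega>) x > e} \<le> (\<Sum>i\<in>I. measure M {\<omega> \<in> space M. dist (Y i n \<omega>) (c i) > d})" for n
  proof -
    have ms: "(\<lambda>i. {\<omega> \<in> space M. dist (Y i n \<omega>) (c i) > d}) ` I \<subseteq> sets M"
      using Ym meas_dist_gt by blast
    then have mU: "(\<Union>i\<in>I. {\<omega> \<in> space M. dist (Y i n \<omega>) (c i) > d}) \<in> sets M"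
      using I by blast
    have "measure M {\<omega> \<in> space M. dist (X n \<omega>) x > e} \<le> measure M (\<Union>i\<in>I. {\<omega> \<in> space M. dist (Y i n \<omega>) (c i) > d})"
      by (rule finite_measure_mono[OF sub mU])
    also have "\<dots> \<le> (\<Sum>i\<in>I. measure M {\<omega> \<in> space M. dist (Y i n \<omega>) (c i) > d})"
      by (rule finite_measure_subadditive_finite[OF I ms])
    finally show ?thesis .
  qed
  have "(\<lambda>n. \<Sum>i\<in>I. measure M {\<omega> \<in> space M. dist (Y i n \<omega>) (c i) > d}) \<longlonglongrightarrow> (\<Sum>i\<in>I. 0)"
    using Yc d unfolding conv_in_prob_def by (intro tendsto_sum) auto
  then have h: "(\<lambda>n. \<Sum>i\<in>I. measure M {\<omega> \<in> space M. dist (Y i n \<omega>) (c i) > d}) \<longlonglongrightarrow> 0" by simp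
  show "(\<lambda>n. measure M {\<omega> \<in> space M. dist (X n \<omega>) x > e}) \<longlonglongrightarrow> 0"
  proof (rule tendsto_sandwich[OF _ _ tendsto_const h])
    show "\<forall>\<^sub>F n in sequentially. 0 \<le> measure M {\<omega> \<in> space M. dist (X n \<omega>) x > e}" by simp
    show "\<forall>\<^sub>F n in sequentially. measure M {\<omega> \<in> space M. dist (X n \<omega>) x > e} \<le> (\<Sum>i\<in>I. measure M {\<omega> \<in> space M. dist (Y i n \<omega>) (c i) > d})"
      using le by (simp add: always_eventually)
  qed
qed

lemma cip_cont:
  fixes X :: "nat \<Rightarrow> 'a \<Rightarrow> 'b::metric_space" and g :: "'b \<Rightarrow> 'c::metric_space"
  assumes P: "prob_space M" and X: "conv_in_prob M X c" and g: "isCont g c"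
    and gm: "g \<in> borel_measurable borel"
  shows "conv_in_prob M (\<lambda>n \<omega>. g (X n \<omega>)) (g c)"
  unfolding conv_in_prob_def
proof (intro conjI allI impI)
  interpret prob_space M by fact
  have Xm: "X n \<in> borel_measurable M" for n using X unfolding conv_in_prob_def by blast
  show "(\<lambda>\<omega>. g (X n \<omega>)) \<in> borel_measurable M" for n
    using measurable_comp[OF Xm gm] by (simp add: comp_def)
  fix e :: real assume e: "e > 0"
  obtain d where d: "d > 0" and dd0: "\<And>y. y \<noteq> c \<Longrightarrow> dist y c < d \<Longrightarrow> dist (g y) (g c) < e"
    using g e unfolding isCont_def LIM_def by blast
  have dd: "dist (g y) (g c) < e" if "dist y c < d" for y
    using dd0[OF _ that] e by (cases "y = c") auto
  have le: "measure M {\<omega> \<in> space M. dist (g (X n \<omega>)) (g c) > e} \<le> measure M {\<omega> \<in> space M. dist (X n \<omega>) c > d/2}" for n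
  proof (rule finite_measure_mono)
    show "{\<omega> \<in> space M. dist (g (X n \<omega>)) (g c) > e} \<subseteq> {\<omega> \<in> space M. dist (X n \<omega>) c > d/2}"
    proof (intro subsetI, elim CollectE conjE, intro CollectI conjI)
      fix \<omega> assume w: "\<omega> \<in> space M" "e < dist (g (X n \<omega>)) (g c)"
      then show "\<omega> \<in> space M" by simp
      have "\<not> dist (X n \<omega>) c < d" using dd w(2) by force
      then show "d/2 < dist (X n \<omega>) c" using d by simp
    qed
    show "{\<omega> \<in> space M. dist (X n \<omega>) c > d/2} \<in> sets M" by (rule meas_dist_gt[OF Xm])
  qed
  have "d/2 > 0" using d by simp
  then have "(\<lambda>n. measure M {\<omega> \<in> space M. dist (X n \<omega>) c > d/2}) \<longlonglongrightarrow> 0"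
    using X unfolding conv_in_prob_def by blast
  note h = this
  show "(\<lambda>n. measure M {\<omega> \<in> space M. dist (g (X n \<omega>)) (g c) > e}) \<longlonglongrightarrow> 0"
  proof (rule tendsto_sandwich[OF _ _ tendsto_const h])
    show "\<forall>\<^sub>F n in sequentially. 0 \<le> measure M {\<omega> \<in> space M. dist (g (X n \<omega>)) (g c) > e}" by simp
    show "\<forall>\<^sub>F n in sequentially. measure M {\<omega> \<in> space M. dist (g (X n \<omega>)) (g c) > e} \<le> measure M {\<omega> \<in> space M. dist (X n \<omega>) c > d/2}"
      using le by (simp add: always_eventually)
  qed
qed

lemma cip_vec:
  fixes X :: "nat \<Rightarrow> 'a \<Rightarrow> 'b::metric_space ^'n"
  assumes P: "prob_space M" and Xm: "\<And>n. X n \<in> borel_measurable M"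
    and c: "\<And>i. conv_in_prob M (\<lambda>n \<omega>. X n \<omega> $ i) (c $ i)"
  shows "conv_in_prob M X c"
proof (rule cip_bound[OF P _ Xm, of UNIV "\<lambda>i n \<omega>. X n \<omega> $ i" "\<lambda>i. c $ i"])
  show "finite (UNIV :: 'n set)" by simp
  show "conv_in_prob M (\<lambda>n \<omega>. X n \<omega> $ i) (c $ i)" for i by (rule c)
  show "dist (X n \<omega>) c \<le> (\<Sum>i\<in>UNIV. dist (X n \<omega> $ i) (c $ i))" for n \<omega>
    unfolding dist_vec_def by (rule L2_set_le_sum) simp
qed

lemma cip_dist:
  assumes X: "conv_in_prob M X a"
  shows "conv_in_prob M (\<lambda>n \<omega>. dist (X n \<omega>) a) 0"
  unfolding conv_in_prob_def
proof (intro conjI allI impI)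
  have Xm: "X n \<in> borel_measurable M" for n using X unfolding conv_in_prob_def by blast
  show "(\<lambda>\<omega>. dist (X n \<omega>) a) \<in> borel_measurable M" for n
    using borel_measurable_continuous_on[OF _ Xm, of "\<lambda>x. dist x a"]
    by (simp add: continuous_on_dist continuous_on_id continuous_on_const)
  fix e :: real assume "e > 0"
  have "{\<omega> \<in> space M. dist (dist (X n \<omega>) a) 0 > e} = {\<omega> \<in> space M. dist (X n \<omega>) a > e}" for n
    by (simp add: dist_real_def)
  then show "(\<lambda>n. measure M {\<omega> \<in> space M. dist (dist (X n \<omega>) a) 0 > e}) \<longlonglongrightarrow> 0"
    using X \<open>e > 0\<close> unfolding conv_in_prob_def by simp
qed

lemma cip_pair:
  fixes X :: "nat \<Rightarrow> 'a \<Rightarrow> 'b::{metric_space,second_countable_topology}"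
    and Y :: "nat \<Rightarrow> 'a \<Rightarrow> 'c::{metric_space,second_countable_topology}"
  assumes P: "prob_space M" and X: "conv_in_prob M X a" and Y: "conv_in_prob M Y b"
  shows "conv_in_prob M (\<lambda>n \<omega>. (X n \<omega>, Y n \<omega>)) (a, b)"
proof -
  have Xm: "X n \<in> borel_measurable M" for n using X unfolding conv_in_prob_def by blast
  have Ym: "Y n \<in> borel_measurable M" for n using Y unfolding conv_in_prob_def by blast
  have m: "(\<lambda>\<omega>. (X n \<omega>, Y n \<omega>)) \<in> borel_measurable M" for n
    using Xm Ym by (intro borel_measurable_Pair) auto
  let ?Z = "\<lambda>q::bool. if q then (\<lambda>n \<omega>. dist (X n \<omega>) a) else (\<lambda>n \<omega>. dist (Y n \<omega>) b)"
  show ?thesis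
  proof (rule cip_bound[OF P _ m, of UNIV ?Z "\<lambda>_. 0"])
    show "finite (UNIV :: bool set)" by simp
    show "conv_in_prob M (?Z i) 0" for i
    proof (cases i)
      case True
      show ?thesis using cip_dist[OF X] True by simp
    next
      case False
      show ?thesis using cip_dist[OF Y] False by simp
    qed
    show "dist (X n \<omega>, Y n \<omega>) (a, b) \<le> (\<Sum>i\<in>UNIV. dist (?Z i n \<omega>) 0)" for n \<omega>
      using sqrt_sum_squares_le_sum[OF zero_le_dist zero_le_dist, of "X n \<omega>" a "Y n \<omega>" b]
      by (simp add: UNIV_bool dist_Pair_Pair add.commute)
  qed
qed

lemma cip_eventually_const:
  assumes P: "prob_space M" and m: "\<And>n. X n \<in> borel_measurable M"
    and ev: "\<And>n \<omega>. n \<ge> N \<Longrightarrow> \<omega> \<in> space M \<Longrightarrow> X n \<omega> = c"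
  shows "conv_in_prob M X c"
  unfolding conv_in_prob_def
proof (intro conjI allI impI)
  show "X n \<in> borel_measurable M" for n by fact
  fix e :: real assume "e > 0"
  have E: "{\<omega> \<in> space M. dist (X n \<omega>) c > e} = {}" if "n \<ge> N" for n
    using ev[OF that] \<open>e > 0\<close> by auto
  have "\<forall>n\<ge>N. measure M {\<omega> \<in> space M. dist (X n \<omega>) c > e} = 0"
    by (metis E measure_empty)
  then show "(\<lambda>n. measure M {\<omega> \<in> space M. dist (X n \<omega>) c > e}) \<longlonglongrightarrow> 0"
    by (intro tendsto_eventually) (auto simp: eventually_sequentially)
qed

definition sqi :: "'a measure \<Rightarrow> ('a \<Rightarrow> real) \<Rightarrow> bool" where
  "sqi M f \<longleftrightarrow> f \<in> borel_measurable M \<and> integrable M (\<lambda>x. (f x)^2)"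

context prob_space begin

lemma sqi_meas: "sqi M f \<Longrightarrow> f \<in> borel_measurable M"
  by (simp add: sqi_def)

lemma sqi_integrable: assumes "sqi M f" shows "integrable M f"
proof -
  have b: "integrable M (\<lambda>x. (f x)^2 + 1)" using assms by (simp add: sqi_def)
  have m: "f \<in> borel_measurable M" using assms by (simp add: sqi_def)
  have a: "AE x in M. norm (f x) \<le> norm ((f x)^2 + 1)"
  proof (rule AE_I2)
    fix x show "norm (f x) \<le> norm ((f x)^2 + 1)"
    proof (cases "\<bar>f x\<bar> \<le> 1")
      case True
      have "0 \<le> (f x)^2" by simp
      then show ?thesis using True by (simp only: real_norm_def)
    next
      case False
      then have "\<bar>f x\<bar> \<le> \<bar>f x\<bar> * \<bar>f x\<bar>" using mult_left_mono[of 1 "\<bar>f x\<bar>" "\<bar>f x\<bar>"] by simp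
      moreover have "\<bar>f x\<bar> * \<bar>f x\<bar> = (f x)^2" by (simp add: power2_eq_square abs_mult_self_eq)
      moreover have "0 \<le> (f x)^2" by simp
      ultimately show ?thesis by (simp only: real_norm_def)
    qed
  qed
  show ?thesis by (rule Bochner_Integration.integrable_bound[OF b m a])
qed

lemma sqi_mult: assumes "sqi M f" "sqi M g" shows "integrable M (\<lambda>x. f x * g x)"
proof -
  have b: "integrable M (\<lambda>x. (f x)^2 + (g x)^2)" using assms by (simp add: sqi_def)
  have m: "(\<lambda>x. f x * g x) \<in> borel_measurable M" using assms by (simp add: sqi_def borel_measurable_times)
  have a: "AE x in M. norm (f x * g x) \<le> norm ((f x)^2 + (g x)^2)"
  proof (rule AE_I2)
    fix x
    have "0 \<le> (\<bar>f x\<bar> - \<bar>g x\<bar>)^2" by simp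
    then have "2 * \<bar>f x * g x\<bar> \<le> (f x)^2 + (g x)^2"
      unfolding power2_diff by (simp add: abs_mult)
    moreover have "0 \<le> \<bar>f x\<bar> * \<bar>g x\<bar>" by simp
    moreover have "0 \<le> (f x)^2 + (g x)^2" by simp
    ultimately show "norm (f x * g x) \<le> norm ((f x)^2 + (g x)^2)"
      by (simp only: real_norm_def abs_mult)
  qed
  show ?thesis by (rule Bochner_Integration.integrable_bound[OF b m a])
qed

lemma sqi_const[simp, intro]: "sqi M (\<lambda>x. c)"
  by (simp add: sqi_def)

lemma sqi_add[intro]: assumes "sqi M f" "sqi M g" shows "sqi M (\<lambda>x. f x + g x)"
proof -
  have "(\<lambda>x. (f x + g x)^2) = (\<lambda>x. (f x)^2 + 2 * (f x * g x) + (g x)^2)"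
    by (simp add: power2_sum algebra_simps)
  then show ?thesis using assms sqi_mult[OF assms] unfolding sqi_def by (simp add: borel_measurable_add)
qed

lemma sqi_scale[intro]: assumes "sqi M f" shows "sqi M (\<lambda>x. c * f x)"
  using assms unfolding sqi_def by (simp add: power_mult_distrib borel_measurable_times)

lemma sqi_minus[intro]: assumes "sqi M f" shows "sqi M (\<lambda>x. - f x)"
  using assms unfolding sqi_def by simp

lemma sqi_diff[intro]: assumes "sqi M f" "sqi M g" shows "sqi M (\<lambda>x. f x - g x)"
  using sqi_add[OF assms(1) sqi_minus[OF assms(2)]] by simp

lemma sqi_sum[intro]: assumes "\<And>k. k \<in> K \<Longrightarrow> sqi M (g k)" shows "sqi M (\<lambda>x. \<Sum>k\<in>K. g k x)"
  using assms
proof (induction K rule: infinite_finite_induct)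
  case (insert k K) then show ?case using sqi_add[of "g k" "\<lambda>x. \<Sum>k\<in>K. g k x"] by simp
qed simp_all

lemma rcov_comm: "rcov M f g = rcov M g f"
  unfolding rcov_def by (simp add: mult.commute)

lemma rcov_add_right: assumes "sqi M f" "sqi M g" "sqi M h"
  shows "rcov M f (\<lambda>x. g x + h x) = rcov M f g + rcov M f h"
  using assms sqi_mult[OF assms(1,2)] sqi_mult[OF assms(1,3)] sqi_integrable[OF assms(2)] sqi_integrable[OF assms(3)]
  unfolding rcov_def by (simp add: distrib_left algebra_simps)

lemma rcov_scale_right: "rcov M f (\<lambda>x. c * g x) = c * rcov M f g"
  unfolding rcov_def by (simp add: algebra_simps)

lemma rcov_const_right: "rcov M f (\<lambda>x. c) = 0"
  unfolding rcov_def by (simp add: prob_space)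

lemma rcov_diff_right: assumes "sqi M f" "sqi M g" "sqi M h"
  shows "rcov M f (\<lambda>x. g x - h x) = rcov M f g - rcov M f h"
  using rcov_add_right[OF assms(1,2) sqi_scale[OF assms(3), of "-1"]] rcov_scale_right[of f "-1" h]
  by simp

lemma rcov_sum_right: assumes "sqi M f" "\<And>k. k \<in> K \<Longrightarrow> sqi M (g k)"
  shows "rcov M f (\<lambda>x. \<Sum>k\<in>K. g k x) = (\<Sum>k\<in>K. rcov M f (g k))"
  using assms(2)
proof (induction K rule: infinite_finite_induct)
  case (infinite K) then show ?case by (simp add: rcov_const_right)
next
  case empty then show ?case by (simp add: rcov_const_right)
next
  case (insert k K)
  have "rcov M f (\<lambda>x. \<Sum>k\<in>insert k K. g k x) = rcov M f (\<lambda>x. g k x + (\<Sum>k\<in>K. g k x))"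
    using insert by simp
  also have "\<dots> = rcov M f (g k) + rcov M f (\<lambda>x. \<Sum>k\<in>K. g k x)"
    using rcov_add_right[OF assms(1), of "g k" "\<lambda>x. \<Sum>k\<in>K. g k x"] insert by auto
  finally show ?case using insert by simp
qed

lemma rcov_lin_right: assumes "sqi M f" "\<And>k. k \<in> K \<Longrightarrow> sqi M (g k)"
  shows "rcov M f (\<lambda>x. c0 + (\<Sum>k\<in>K. c k * g k x)) = (\<Sum>k\<in>K. c k * rcov M f (g k))"
proof -
  have "rcov M f (\<lambda>x. c0 + (\<Sum>k\<in>K. c k * g k x)) = rcov M f (\<lambda>x. c0) + rcov M f (\<lambda>x. \<Sum>k\<in>K. c k * g k x)"
    using assms by (intro rcov_add_right sqi_sum sqi_scale) auto
  also have "\<dots> = (\<Sum>k\<in>K. c k * rcov M f (g k))"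
    using assms by (subst rcov_sum_right) (auto simp: rcov_const_right rcov_scale_right)
  finally show ?thesis .
qed

lemma rcov_self_nonneg: assumes "sqi M f" shows "rcov M f f \<ge> 0"
proof -
  let ?m = "\<integral>x. f x \<partial>M"
  have i: "integrable M f" using sqi_integrable[OF assms] .
  have "(\<lambda>x. (f x - ?m)^2) = (\<lambda>x. (f x)^2 - 2 * ?m * f x + ?m^2)"
    by (rule ext) (simp add: power2_diff algebra_simps)
  then have "(\<integral>x. (f x - ?m)^2 \<partial>M) = (\<integral>x. (f x)^2 - 2 * ?m * f x + ?m^2 \<partial>M)"
    by simp
  also have "\<dots> = (\<integral>x. (f x)^2 \<partial>M) - 2 * ?m * ?m + ?m^2"
    using assms i unfolding sqi_def by (simp add: prob_space)
  also have "\<dots> = rcov M f f"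
    unfolding rcov_def by (simp add: power2_eq_square)
  finally have "rcov M f f = (\<integral>x. (f x - ?m)^2 \<partial>M)" by simp
  then show ?thesis by simp
qed

end

lemma pd_inj:
  fixes B :: "real^'n^'n"
  assumes "pos_def_mat B" shows "inj ((*v) B)"
proof (rule linear_injective_0[THEN iffD2])
  show "linear ((*v) B)" by simp
  show "\<forall>x. B *v x = 0 \<longrightarrow> x = 0"
    using assms unfolding pos_def_mat_def by (metis inner_zero_right less_irrefl)
qed

lemma pd_surj:
  fixes B :: "real^'n^'n"
  assumes "pos_def_mat B" shows "\<exists>x. B *v x = y"
proof -
  have "surj ((*v) B)"
    by (rule linear_injective_imp_surjective) (auto intro: pd_inj[OF assms])
  then show ?thesis by (metis surjD)
qed

definition neg_prec :: "'n set \<Rightarrow> real^'n^'n \<Rightarrow> bool" where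
  "neg_prec J B \<longleftrightarrow> (\<forall>k\<in>J. \<forall>x. B *v x = axis k 1 \<longrightarrow> (\<forall>i\<in>J. i \<noteq> k \<longrightarrow> x$i \<le> 0))"

lemma pd_step:
  fixes B B' :: "real^'n^'n"
  assumes pd: "pos_def_mat B" and c: "c \<ge> 0"
    and B': "\<And>x. B' *v x = B *v x + (c * x$m) *\<^sub>R axis m 1"
  shows "pos_def_mat B'"
  unfolding pos_def_mat_def
proof (intro allI impI)
  fix v :: "real^'n" assume "v \<noteq> 0"
  then have "v \<bullet> (B *v v) > 0" using pd unfolding pos_def_mat_def by auto
  moreover have "v \<bullet> (B' *v v) = v \<bullet> (B *v v) + c * (v$m)^2"
    by (simp add: B' inner_add_right inner_axis power2_eq_square)
  moreover have "c * (v$m)^2 \<ge> 0" using c by simp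
  ultimately show "v \<bullet> (B' *v v) > 0" by linarith
qed

lemma neg_prec_step:
  fixes B B' :: "real^'n^'n"
  assumes pd: "pos_def_mat B" and c: "c \<ge> 0" and np: "neg_prec J B" and mJ: "m \<in> J"
    and B': "\<And>x. B' *v x = B *v x + (c * x$m) *\<^sub>R axis m 1"
  shows "neg_prec J B'"
  unfolding neg_prec_def
proof (intro ballI allI impI)
  fix k x' i assume kJ: "k \<in> J" and x': "B' *v x' = axis k 1" and iJ: "i \<in> J" and ik: "i \<noteq> k"
  obtain x where x: "B *v x = axis k 1" using pd_surj[OF pd] by blast
  obtain y where y: "B *v y = axis m 1" using pd_surj[OF pd] by blast
  have "B *v (x' - x + (c * x'$m) *\<^sub>R y) = B *v 0"
    using x' x y B'[of x'] by (simp add: algebra_simps)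
  then have "x' - x + (c * x'$m) *\<^sub>R y = 0"
    using pd_inj[OF pd] unfolding inj_def by blast
  then have xe: "x' = x - (c * x'$m) *\<^sub>R y"
    by (simp add: algebra_simps eq_diff_eq)
  have "y \<noteq> 0" using y by (metis axis_eq_0_iff matrix_vector_mult_0_right zero_neq_one)
  then have "y \<bullet> (B *v y) > 0" using pd unfolding pos_def_mat_def by auto
  then have ym: "y$m > 0" using y by (simp add: inner_axis)
  have xm: "x'$m = x$m - c * x'$m * y$m" using arg_cong[where f="\<lambda>v. v$m", OF xe] by simp
  have pos: "1 + c * y$m > 0" using c ym by (smt (verit) mult_nonneg_nonneg)
  have xm2: "x'$m = x$m / (1 + c * y$m)"
    using xm pos by (simp add: field_simps)
  show "x'$i \<le> 0"
  proof (cases "m = k")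
    case True
    then have "y = x" using x y pd_inj[OF pd] unfolding inj_def by auto
    have xi: "x$i \<le> 0" using np kJ x iJ ik unfolding neg_prec_def by blast
    have "x'$i = x$i * (1 - c * x'$m)" using arg_cong[where f="\<lambda>v. v$i", OF xe] \<open>y = x\<close> by (simp add: algebra_simps)
    moreover have "1 - c * x'$m > 0"
    proof -
      have "c * x'$m = (c * y$m) / (1 + c * y$m)" using xm2 \<open>y = x\<close> by simp
      also have "\<dots> < 1" using pos by simp
      finally show ?thesis by simp
    qed
    ultimately show ?thesis using xi by (simp add: mult_nonpos_nonneg)
  next
    case False
    have xmn: "x$m \<le> 0" using np kJ x mJ False unfolding neg_prec_def by blast
    then have xm'n: "x'$m \<le> 0" using xm2 pos by (simp add: divide_nonpos_pos)
    show ?thesis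
    proof (cases "i = m")
      case True then show ?thesis using xm'n by simp
    next
      case False
      have yi: "y$i \<le> 0" using np mJ y iJ False unfolding neg_prec_def by blast
      have xi: "x$i \<le> 0" using np kJ x iJ ik unfolding neg_prec_def by blast
      have "c * x'$m * y$i \<ge> 0" using c xm'n yi
        by (metis mult_nonneg_nonneg mult_nonpos_nonpos mult_nonneg_nonpos2 mult.commute le_less)
      then show ?thesis using arg_cong[where f="\<lambda>v. v$i", OF xe] xi by simp
    qed
  qed
qed

definition diagm :: "'n set \<Rightarrow> ('n \<Rightarrow> real) \<Rightarrow> real^'n^'n" where
  "diagm S d = (\<chi> i j. if i = j \<and> i \<in> S then d i else 0)"

lemma diagm_mult: "diagm S d *v x = (\<chi> i. if i \<in> S then d i * x$i else 0)"
proof -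
  have "(\<Sum>j\<in>UNIV. (if i = j \<and> i \<in> S then d i else 0) * x$j) = (if i \<in> S then d i * x$i else 0)" for i
  proof -
    have "(\<Sum>j\<in>UNIV. (if i = j \<and> i \<in> S then d i else 0) * x$j) = (\<Sum>j\<in>UNIV. if j = i then (if i \<in> S then d i * x$i else 0) else 0)"
      by (rule sum.cong) auto
    then show ?thesis by simp
  qed
  then show ?thesis unfolding diagm_def matrix_vector_mult_def by (simp add: vec_eq_iff)
qed

lemma diag_induct:
  fixes B :: "real^'n^'n"
  assumes pd: "pos_def_mat B" and np: "neg_prec J B" and SJ: "S \<subseteq> J"
    and d: "\<And>i. i \<in> S \<Longrightarrow> d i \<ge> 0"
  shows "pos_def_mat (B + diagm S d) \<and> neg_prec J (B + diagm S d)"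
proof -
  have "finite S" by simp
  then show ?thesis using SJ d
  proof (induction S rule: finite_induct)
    case empty
    have "diagm {} d = 0" by (simp add: diagm_def vec_eq_iff)
    then show ?case using pd np by simp
  next
    case (insert m S)
    have IH: "pos_def_mat (B + diagm S d)" "neg_prec J (B + diagm S d)" using insert by auto
    have e: "(B + diagm (insert m S) d) *v x = (B + diagm S d) *v x + (d m * x$m) *\<^sub>R axis m 1" for x
      using insert(2) by (auto simp: matrix_vector_mult_add_rdistrib diagm_mult vec_eq_iff axis_def)
    show ?case
      using pd_step[OF IH(1) _ e] neg_prec_step[OF IH(1) _ IH(2) _ e] insert by auto
  qed
qed

lemma neg_prec_final:
  fixes B :: "real^'n^'n"
  assumes pd: "pos_def_mat B" and np: "neg_prec J B" and j0: "j0 \<in> J"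
    and eq: "B *v \<delta> = w" and wpos: "\<And>i. w$i \<ge> 0" and wz: "\<And>i. i \<notin> J - {j0} \<Longrightarrow> w$i = 0"
  shows "\<delta>$j0 \<le> 0"
proof -
  have "\<forall>k. \<exists>x. B *v x = axis k 1" using pd_surj[OF pd] by blast
  from choice[OF this] obtain sol where sol: "\<And>k. B *v sol k = axis k 1" by blast
  have wsum: "w = (\<Sum>k\<in>J - {j0}. w$k *\<^sub>R axis k 1)"
  proof (subst vec_eq_iff, intro allI)
    fix i
    show "w$i = (\<Sum>k\<in>J - {j0}. w$k *\<^sub>R axis k (1::real))$i"
      using wz[of i] by (auto simp: axis_def sum.delta if_distrib cong: if_cong)
  qed
  have "B *v (\<Sum>k\<in>J - {j0}. w$k *\<^sub>R sol k) = (\<Sum>k\<in>J - {j0}. w$k *\<^sub>R axis k 1)"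
    by (simp add: linear_sum[OF matrix_vector_mul_linear] matrix_vector_mult_scaleR sol)
  then have "\<delta> = (\<Sum>k\<in>J - {j0}. w$k *\<^sub>R sol k)"
    using pd_inj[OF pd] eq wsum unfolding inj_def by metis
  then have "\<delta>$j0 = (\<Sum>k\<in>J - {j0}. w$k * sol k $ j0)" by simp
  also have "\<dots> \<le> 0"
  proof (rule sum_nonpos)
    fix k assume "k \<in> J - {j0}"
    then have "sol k $ j0 \<le> 0" using np sol j0 unfolding neg_prec_def by auto
    then show "w$k * sol k $ j0 \<le> 0" using wpos[of k] by (simp add: mult_nonneg_nonpos)
  qed
  finally show ?thesis .
qed

lemma quad_min:
  fixes A B C :: real
  assumes "\<And>t. A \<le> A - 2 * t * B + t^2 * C" and "C \<ge> 0"
  shows "B = 0"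
proof (rule ccontr)
  assume B: "B \<noteq> 0"
  define q where "q = C + 1"
  have q: "q > 0" using assms(2) by (simp add: q_def)
  define t where "t = B / q"
  have tq: "t * q = B" using q by (simp add: t_def)
  have "A \<le> A - 2 * t * B + t^2 * C" by (rule assms(1))
  then have "0 \<le> - 2 * t * B + t^2 * C" by simp
  then have "0 \<le> q^2 * (- 2 * t * B + t^2 * C)" using q by simp
  also have "q^2 * (- 2 * t * B + t^2 * C) = - 2 * (t * q) * B * q + (t * q)^2 * C"
    by (simp add: algebra_simps power2_eq_square)
  also have "\<dots> = - (B^2 * (C + 2))" unfolding tq by (simp add: q_def algebra_simps power2_eq_square)
  finally have "B^2 * (C + 2) \<le> 0" by simp
  moreover have "B^2 * (C + 2) > 0" using B assms(2) by simp
  ultimately show False by simp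
qed

context prob_space begin

lemma sq_expand:
  assumes "sqi M r" "sqi M w"
  shows "(\<integral>\<omega>. (r \<omega> - t * w \<omega>)^2 \<partial>M) = (\<integral>\<omega>. (r \<omega>)^2 \<partial>M) - 2 * t * (\<integral>\<omega>. r \<omega> * w \<omega> \<partial>M) + t^2 * (\<integral>\<omega>. (w \<omega>)^2 \<partial>M)"
proof -
  have e: "(\<lambda>\<omega>. (r \<omega> - t * w \<omega>)^2) = (\<lambda>\<omega>. (r \<omega>)^2 - (2 * t) * (r \<omega> * w \<omega>) + t^2 * (w \<omega>)^2)"
    by (rule ext) (simp add: power2_diff power_mult_distrib algebra_simps)
  show ?thesis unfolding e
    using assms sqi_mult[OF assms] unfolding sqi_def by simp
qed

lemma foc:
  assumes r: "is_lin_resid M K C U r" and U: "sqi M U" and Cs: "\<And>l. l \<in> K \<Longrightarrow> sqi M (C l)"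
    and fK: "finite K"
  shows "\<exists>a c. r = (\<lambda>\<omega>. U \<omega> - a - (\<Sum>l\<in>K. c l * C l \<omega>)) \<and> (\<forall>l\<in>K. rcov M r (C l) = 0)
           \<and> (\<integral>\<omega>. r \<omega> \<partial>M) = 0 \<and> sqi M r"
proof -
  obtain a c where rdef: "r = (\<lambda>\<omega>. U \<omega> - a - (\<Sum>l\<in>K. c l * C l \<omega>))"
    and min: "\<And>a' c'. (\<integral>\<omega>. (U \<omega> - a - (\<Sum>k\<in>K. c k * C k \<omega>))^2 \<partial>M)
               \<le> (\<integral>\<omega>. (U \<omega> - a' - (\<Sum>k\<in>K. c' k * C k \<omega>))^2 \<partial>M)"
    using r unfolding is_lin_resid_def by blast
  have sr: "sqi M r" unfolding rdef using U Cs by (intro sqi_diff sqi_sum sqi_scale) auto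
  have min': "(\<integral>\<omega>. (r \<omega>)^2 \<partial>M) \<le> (\<integral>\<omega>. (U \<omega> - a' - (\<Sum>k\<in>K. c' k * C k \<omega>))^2 \<partial>M)" for a' c'
    using min[of a' c'] unfolding rdef by simp
  have orth: "(\<integral>\<omega>. r \<omega> * w \<omega> \<partial>M) = 0"
    if w: "sqi M w" and shift: "\<And>t. \<exists>a' c'. (\<lambda>\<omega>. r \<omega> - t * w \<omega>) = (\<lambda>\<omega>. U \<omega> - a' - (\<Sum>k\<in>K. c' k * C k \<omega>))" for w
  proof (rule quad_min)
    fix t
    obtain a' c' where e: "(\<lambda>\<omega>. r \<omega> - t * w \<omega>) = (\<lambda>\<omega>. U \<omega> - a' - (\<Sum>k\<in>K. c' k * C k \<omega>))"
      using shift by blast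
    have "(\<integral>\<omega>. (r \<omega>)^2 \<partial>M) \<le> (\<integral>\<omega>. (r \<omega> - t * w \<omega>)^2 \<partial>M)"
    proof -
      have "\<And>\<omega>. r \<omega> - t * w \<omega> = U \<omega> - a' - (\<Sum>k\<in>K. c' k * C k \<omega>)" using e by metis
      then show ?thesis using min'[of a' c'] by simp
    qed
    then show "(\<integral>\<omega>. (r \<omega>)^2 \<partial>M) \<le> (\<integral>\<omega>. (r \<omega>)^2 \<partial>M) - 2 * t * (\<integral>\<omega>. r \<omega> * w \<omega> \<partial>M) + t^2 * (\<integral>\<omega>. (w \<omega>)^2 \<partial>M)"
      using sq_expand[OF sr w] by simp
    show "(\<integral>\<omega>. (w \<omega>)^2 \<partial>M) \<ge> 0" by simp
  qed
  have Er: "(\<integral>\<omega>. r \<omega> \<partial>M) = 0"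
  proof -
    have "(\<integral>\<omega>. r \<omega> * 1 \<partial>M) = 0"
    proof (rule orth)
      show "sqi M (\<lambda>\<omega>. 1)" by simp
      fix t show "\<exists>a' c'. (\<lambda>\<omega>. r \<omega> - t * 1) = (\<lambda>\<omega>. U \<omega> - a' - (\<Sum>k\<in>K. c' k * C k \<omega>))"
        by (rule exI[of _ "a + t"], rule exI[of _ c]) (simp add: rdef algebra_simps)
    qed
    then show ?thesis by simp
  qed
  have cov0: "rcov M r (C l) = 0" if l: "l \<in> K" for l
  proof -
    have "(\<integral>\<omega>. r \<omega> * C l \<omega> \<partial>M) = 0"
    proof (rule orth)
      show "sqi M (C l)" using Cs l by blast
      fix t show "\<exists>a' c'. (\<lambda>\<omega>. r \<omega> - t * C l \<omega>) = (\<lambda>\<omega>. U \<omega> - a' - (\<Sum>k\<in>K. c' k * C k \<omega>))"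
      proof (rule exI[of _ a], rule exI[of _ "\<lambda>k. c k + (if k = l then t else 0)"])
        have "(\<Sum>k\<in>K. (c k + (if k = l then t else 0)) * C k \<omega>) = (\<Sum>k\<in>K. c k * C k \<omega>) + t * C l \<omega>" for \<omega>
        proof -
          have "(\<Sum>k\<in>K. (c k + (if k = l then t else 0)) * C k \<omega>) = (\<Sum>k\<in>K. c k * C k \<omega> + (if k = l then t * C l \<omega> else 0))"
            by (rule sum.cong) (auto simp: distrib_right)
          also have "\<dots> = (\<Sum>k\<in>K. c k * C k \<omega>) + t * C l \<omega>"
            using l fK by (simp add: sum.distrib sum.delta)
          finally show ?thesis .
        qed
        then show "(\<lambda>\<omega>. r \<omega> - t * C l \<omega>) = (\<lambda>\<omega>. U \<omega> - a - (\<Sum>k\<in>K. (c k + (if k = l then t else 0)) * C k \<omega>))"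
          by (simp add: rdef algebra_simps)
      qed
    qed
    then show ?thesis unfolding rcov_def using Er by simp
  qed
  show ?thesis using rdef cov0 Er sr by blast
qed

lemma sq_expand_plus:
  assumes "sqi M r" "sqi M w"
  shows "(\<integral>\<omega>. (r \<omega> + w \<omega>)^2 \<partial>M) = (\<integral>\<omega>. (r \<omega>)^2 \<partial>M) + 2 * (\<integral>\<omega>. r \<omega> * w \<omega> \<partial>M) + (\<integral>\<omega>. (w \<omega>)^2 \<partial>M)"
proof -
  have e: "(\<lambda>\<omega>. (r \<omega> + w \<omega>)^2) = (\<lambda>\<omega>. (r \<omega>)^2 + 2 * (r \<omega> * w \<omega>) + (w \<omega>)^2)"
    by (rule ext) (simp add: power2_sum algebra_simps)
  show ?thesis unfolding e
    using assms sqi_mult[OF assms] unfolding sqi_def by simp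
qed

lemma integral_sum_lin:
  assumes "\<And>k. k \<in> K \<Longrightarrow> sqi M (g k)"
  shows "(\<integral>\<omega>. (\<Sum>k\<in>K. c k * g k \<omega>) \<partial>M) = (\<Sum>k\<in>K. c k * (\<integral>\<omega>. g k \<omega> \<partial>M))"
  using assms by (subst Bochner_Integration.integral_sum) (auto intro: sqi_integrable)

lemma pd_solve_sub:
  fixes S :: "real^'n^'n"
  assumes pd: "pos_def_mat S"
  shows "\<exists>c. (\<forall>l\<in>K. (S *v c)$l = s$l) \<and> (\<forall>l. l \<notin> K \<longrightarrow> c$l = 0)"
proof -
  define L where "L = (\<lambda>c. (\<chi> l. if l \<in> K then (S *v c)$l else c$l) :: real^'n)"
  have lin: "linear L"
    unfolding L_def by (rule linearI) (auto simp: vec_eq_iff matrix_vector_right_distrib matrix_vector_mult_scaleR)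
  have inj: "inj L"
  proof (rule linear_injective_0[OF lin, THEN iffD2], intro allI impI)
    fix c assume "L c = 0"
    then have h1: "\<And>l. l \<in> K \<Longrightarrow> (S *v c)$l = 0" and h2: "\<And>l. l \<notin> K \<Longrightarrow> c$l = 0"
      unfolding L_def by (auto simp: vec_eq_iff split: if_splits)
    have "c \<bullet> (S *v c) = (\<Sum>l\<in>UNIV. c$l * (S *v c)$l)" by (simp add: inner_vec_def)
    also have "\<dots> = 0" by (rule sum.neutral) (metis h1 h2 mult_zero_left mult_zero_right)
    finally show "c = 0" using pd unfolding pos_def_mat_def by (metis less_irrefl)
  qed
  have "surj L" by (rule linear_injective_imp_surjective[OF lin inj]) simp
  then obtain c where "L c = (\<chi> l. if l \<in> K then s$l else 0)" by (metis surjD)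
  then have "(\<forall>l\<in>K. (S *v c)$l = s$l) \<and> (\<forall>l. l \<notin> K \<longrightarrow> c$l = 0)"
    unfolding L_def by (auto simp: vec_eq_iff split: if_splits)
  then show ?thesis by blast
qed

lemma lin_resid_exists:
  fixes V :: "'a \<Rightarrow> real^'n"
  assumes Vs: "\<And>l. sqi M (\<lambda>\<omega>. V \<omega> $ l)" and pd: "pos_def_mat (cov_mat M V)" and U: "sqi M U"
  shows "\<exists>r. is_lin_resid M K (\<lambda>l \<omega>. V \<omega> $ l) U r"
proof -
  define S where "S = cov_mat M V"
  define s where "s = (\<chi> l. rcov M (\<lambda>\<omega>. V \<omega> $ l) U)"
  obtain c where c1: "\<And>l. l \<in> K \<Longrightarrow> (S *v c)$l = s$l" and c0: "\<And>l. l \<notin> K \<Longrightarrow> c$l = 0"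
    using pd_solve_sub[of S K s] pd unfolding S_def by blast
  define a where "a = (\<integral>\<omega>. U \<omega> \<partial>M) - (\<Sum>l\<in>K. c$l * (\<integral>\<omega>. V \<omega> $ l \<partial>M))"
  define r where "r = (\<lambda>\<omega>. U \<omega> - a - (\<Sum>l\<in>K. c$l * V \<omega> $ l))"
  have sr: "sqi M r" unfolding r_def using U Vs by (intro sqi_diff sqi_sum sqi_scale) auto
  have Er: "(\<integral>\<omega>. r \<omega> \<partial>M) = 0"
  proof -
    have "(\<integral>\<omega>. r \<omega> \<partial>M) = (\<integral>\<omega>. U \<omega> \<partial>M) - a - (\<integral>\<omega>. (\<Sum>l\<in>K. c$l * V \<omega> $ l) \<partial>M)"
      unfolding r_def using U Vs
      by (subst Bochner_Integration.integral_diff, auto intro!: sqi_integrable sqi_diff sqi_sum sqi_scale simp: prob_space,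
          subst Bochner_Integration.integral_diff, auto intro!: sqi_integrable simp: prob_space)
    also have "\<dots> = 0" unfolding a_def using Vs by (subst integral_sum_lin) auto
    finally show ?thesis .
  qed
  have covr: "rcov M (\<lambda>\<omega>. V \<omega> $ l) r = 0" if l: "l \<in> K" for l
  proof -
    have "rcov M (\<lambda>\<omega>. V \<omega> $ l) r = rcov M (\<lambda>\<omega>. V \<omega> $ l) U - rcov M (\<lambda>\<omega>. V \<omega> $ l) (\<lambda>\<omega>. a + (\<Sum>m\<in>K. c$m * V \<omega> $ m))"
      unfolding r_def using U Vs
      by (subst rcov_diff_right[symmetric]) (auto intro!: sqi_add sqi_sum sqi_scale simp: diff_diff_eq)
    also have "\<dots> = s$l - (\<Sum>m\<in>K. c$m * rcov M (\<lambda>\<omega>. V \<omega> $ l) (\<lambda>\<omega>. V \<omega> $ m))"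
      using Vs by (subst rcov_lin_right) (auto simp: s_def)
    also have "(\<Sum>m\<in>K. c$m * rcov M (\<lambda>\<omega>. V \<omega> $ l) (\<lambda>\<omega>. V \<omega> $ m)) = (\<Sum>m\<in>UNIV. S$l$m * c$m)"
      by (rule sum.mono_neutral_cong_left) (auto simp: c0 S_def cov_mat_def)
    also have "\<dots> = (S *v c)$l" by (simp add: matrix_vector_mult_def)
    also have "\<dots> = s$l" using c1 l by simp
    finally show ?thesis by simp
  qed
  have "is_lin_resid M K (\<lambda>l \<omega>. V \<omega> $ l) U r"
    unfolding is_lin_resid_def
  proof (intro exI conjI allI)
    show "r = (\<lambda>\<omega>. U \<omega> - a - (\<Sum>l\<in>K. c$l * V \<omega> $ l))" by (simp add: r_def)
    fix a' :: real and c' :: "'n \<Rightarrow> real"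
    define w where "w = (\<lambda>\<omega>. (a - a') + (\<Sum>l\<in>K. (c$l - c' l) * V \<omega> $ l))"
    have sw: "sqi M w" unfolding w_def using Vs by (intro sqi_add sqi_sum sqi_scale) auto
    have e: "(\<lambda>\<omega>. (U \<omega> - a' - (\<Sum>l\<in>K. c' l * V \<omega> $ l))^2) = (\<lambda>\<omega>. (r \<omega> + w \<omega>)^2)"
      by (rule ext) (simp add: r_def w_def left_diff_distrib sum_subtractf algebra_simps)
    have "rcov M r w = 0"
    proof -
      have "rcov M r w = (\<Sum>l\<in>K. (c$l - c' l) * rcov M r (\<lambda>\<omega>. V \<omega> $ l))"
        unfolding w_def using sr Vs by (subst rcov_lin_right) auto
      also have "\<dots> = 0" using covr by (simp add: rcov_comm)
      finally show ?thesis .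
    qed
    then have rw: "(\<integral>\<omega>. r \<omega> * w \<omega> \<partial>M) = 0" using Er unfolding rcov_def by simp
    have "(\<integral>\<omega>. (r \<omega>)^2 \<partial>M) \<le> (\<integral>\<omega>. (r \<omega> + w \<omega>)^2 \<partial>M)"
      using sq_expand_plus[OF sr sw] rw by simp
    then show "(\<integral>\<omega>. (U \<omega> - a - (\<Sum>l\<in>K. c$l * V \<omega> $ l))^2 \<partial>M) \<le> (\<integral>\<omega>. (U \<omega> - a' - (\<Sum>l\<in>K. c' l * V \<omega> $ l))^2 \<partial>M)"
      unfolding e by (simp add: r_def)
  qed
  then show ?thesis by blast
qed

lemma resid_props:
  fixes V :: "'a \<Rightarrow> real^'n"
  assumes Vs: "\<And>l. sqi M (\<lambda>\<omega>. V \<omega> $ l)" and pd: "pos_def_mat (cov_mat M V)"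
  shows "\<exists>a c. lin_resid M K (\<lambda>l \<omega>. V \<omega> $ l) (\<lambda>\<omega>. V \<omega> $ i)
              = (\<lambda>\<omega>. V \<omega> $ i - a - (\<Sum>l\<in>K. c l * V \<omega> $ l))
         \<and> (\<forall>l\<in>K. rcov M (lin_resid M K (\<lambda>l \<omega>. V \<omega> $ l) (\<lambda>\<omega>. V \<omega> $ i)) (\<lambda>\<omega>. V \<omega> $ l) = 0)
         \<and> sqi M (lin_resid M K (\<lambda>l \<omega>. V \<omega> $ l) (\<lambda>\<omega>. V \<omega> $ i))"
proof -
  have "is_lin_resid M K (\<lambda>l \<omega>. V \<omega> $ l) (\<lambda>\<omega>. V \<omega> $ i) (lin_resid M K (\<lambda>l \<omega>. V \<omega> $ l) (\<lambda>\<omega>. V \<omega> $ i))"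
    using lin_resid_exists[OF Vs pd Vs, of K] unfolding lin_resid_def by (rule someI_ex)
  from foc[OF this Vs Vs] show ?thesis by auto
qed

lemma rcov_resid_self:
  fixes V :: "'a \<Rightarrow> real^'n"
  assumes Vs: "\<And>l. sqi M (\<lambda>\<omega>. V \<omega> $ l)" and sf: "sqi M f" and sr: "sqi M r"
    and r: "r = (\<lambda>\<omega>. V \<omega> $ i - a - (\<Sum>l\<in>K. c l * V \<omega> $ l))"
    and orth: "\<forall>l\<in>K. rcov M f (\<lambda>\<omega>. V \<omega> $ l) = 0"
  shows "rcov M f (\<lambda>\<omega>. V \<omega> $ i) = rcov M f r"
proof -
  have "(\<lambda>\<omega>. V \<omega> $ i) = (\<lambda>\<omega>. r \<omega> + (a + (\<Sum>l\<in>K. c l * V \<omega> $ l)))"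
    unfolding r by (rule ext) simp
  then have "rcov M f (\<lambda>\<omega>. V \<omega> $ i) = rcov M f r + rcov M f (\<lambda>\<omega>. a + (\<Sum>l\<in>K. c l * V \<omega> $ l))"
    using sf sr Vs by (simp add: rcov_add_right sqi_add sqi_sum sqi_scale)
  also have "rcov M f (\<lambda>\<omega>. a + (\<Sum>l\<in>K. c l * V \<omega> $ l)) = 0"
    using sf Vs orth by (subst rcov_lin_right) auto
  finally show ?thesis by simp
qed

lemma pc_neg_prec:
  fixes V :: "'a \<Rightarrow> real^'n"
  assumes Vs: "\<And>l. sqi M (\<lambda>\<omega>. V \<omega> $ l)" and pd: "pos_def_mat (cov_mat M V)"
   and pc: "\<And>i k. i \<in> J \<Longrightarrow> k \<in> J \<Longrightarrow> i \<noteq> k \<Longrightarrow>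
        partial_corr M (UNIV - {i,k}) (\<lambda>l \<omega>. V \<omega> $ l) (\<lambda>\<omega>. V \<omega> $ i) (\<lambda>\<omega>. V \<omega> $ k) > 0"
  shows "neg_prec J (cov_mat M V)"
  unfolding neg_prec_def
proof (intro ballI allI impI)
  fix k x i assume kJ: "k \<in> J" and x: "cov_mat M V *v x = axis k 1" and iJ: "i \<in> J" and ik: "i \<noteq> k"
  define K where "K = UNIV - {i, k}"
  define C where "C = (\<lambda>l \<omega>. V \<omega> $ l)"
  define ri where "ri = lin_resid M K C (\<lambda>\<omega>. V \<omega> $ i)"
  define rk where "rk = lin_resid M K C (\<lambda>\<omega>. V \<omega> $ k)"
  obtain ai ci where ri: "ri = (\<lambda>\<omega>. V \<omega> $ i - ai - (\<Sum>l\<in>K. ci l * V \<omega> $ l))"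
    and ori: "\<forall>l\<in>K. rcov M ri (\<lambda>\<omega>. V \<omega> $ l) = 0" and sri: "sqi M ri"
    using resid_props[OF Vs pd, of K i] unfolding ri_def C_def by blast
  obtain ak ck where rk: "rk = (\<lambda>\<omega>. V \<omega> $ k - ak - (\<Sum>l\<in>K. ck l * V \<omega> $ l))"
    and ork: "\<forall>l\<in>K. rcov M rk (\<lambda>\<omega>. V \<omega> $ l) = 0" and srk: "sqi M rk"
    using resid_props[OF Vs pd, of K k] unfolding rk_def C_def by blast
  define sii where "sii = rcov M ri ri"
  define sik where "sik = rcov M ri rk"
  define skk where "skk = rcov M rk rk"
  have A: "rcov M ri (\<lambda>\<omega>. V \<omega> $ i) = sii"
    unfolding sii_def by (rule rcov_resid_self[OF Vs sri sri ri ori])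
  have B: "rcov M ri (\<lambda>\<omega>. V \<omega> $ k) = sik"
    unfolding sik_def by (rule rcov_resid_self[OF Vs sri srk rk ori])
  define T where "T = (\<lambda>\<omega>. 0 + (\<Sum>m\<in>UNIV. x$m * V \<omega> $ m))"
  have sT: "sqi M T" unfolding T_def using Vs by (intro sqi_add sqi_sum sqi_scale) auto
  have U: "(UNIV :: 'n set) = insert i (insert k K)" unfolding K_def by auto
  have "rcov M ri T = (\<Sum>m\<in>UNIV. x$m * rcov M ri (\<lambda>\<omega>. V \<omega> $ m))"
    unfolding T_def using sri Vs by (subst rcov_lin_right) auto
  also have "\<dots> = x$i * rcov M ri (\<lambda>\<omega>. V \<omega> $ i) + x$k * rcov M ri (\<lambda>\<omega>. V \<omega> $ k)
      + (\<Sum>m\<in>K. x$m * rcov M ri (\<lambda>\<omega>. V \<omega> $ m))"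
    by (subst U) (simp add: ik K_def)
  also have "(\<Sum>m\<in>K. x$m * rcov M ri (\<lambda>\<omega>. V \<omega> $ m)) = 0" using ori by simp
  finally have C1: "rcov M ri T = x$i * sii + x$k * sik" using A B by simp
  have TV: "rcov M T (\<lambda>\<omega>. V \<omega> $ l) = (if l = k then 1 else 0)" for l
  proof -
    have "rcov M T (\<lambda>\<omega>. V \<omega> $ l) = rcov M (\<lambda>\<omega>. V \<omega> $ l) T" by (rule rcov_comm)
    also have "\<dots> = (\<Sum>m\<in>UNIV. x$m * rcov M (\<lambda>\<omega>. V \<omega> $ l) (\<lambda>\<omega>. V \<omega> $ m))"
      unfolding T_def using Vs by (subst rcov_lin_right) auto
    also have "\<dots> = (cov_mat M V *v x) $ l"
      by (simp add: matrix_vector_mult_def cov_mat_def mult.commute)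
    also have "\<dots> = (if l = k then 1 else 0)" using x by (simp add: axis_def)
    finally show ?thesis .
  qed
  have "rcov M T ri = rcov M T (\<lambda>\<omega>. V \<omega> $ i)"
    by (rule rcov_resid_self[OF Vs sT sri ri, symmetric]) (auto simp: TV K_def)
  also have "\<dots> = 0" using TV ik by simp
  finally have "rcov M ri T = 0" by (simp add: rcov_comm)
  then have eq: "x$i * sii + x$k * sik = 0" using C1 by simp
  have "x \<noteq> 0" using x by (metis axis_eq_0_iff matrix_vector_mult_0_right zero_neq_one)
  then have "x \<bullet> (cov_mat M V *v x) > 0" using pd unfolding pos_def_mat_def by blast
  then have xk: "x$k > 0" using x by (simp add: inner_axis)
  have pcik: "sik / sqrt (sii * skk) > 0"
    using pc[OF iJ kJ ik] unfolding partial_corr_def rcorr_def sii_def sik_def skk_def ri_def rk_def K_def C_def .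
  have sii0: "sii \<ge> 0" unfolding sii_def by (rule rcov_self_nonneg[OF sri])
  have skk0: "skk \<ge> 0" unfolding skk_def by (rule rcov_self_nonneg[OF srk])
  have sq: "sqrt (sii * skk) \<ge> 0" using sii0 skk0 by simp
  have sikp: "sik > 0" and sqp: "sqrt (sii * skk) > 0"
    using pcik sq by (auto simp: zero_less_divide_iff)
  have "sii \<noteq> 0" using sqp by auto
  then have siip: "sii > 0" using sii0 by simp
  have "x$i * sii = - (x$k * sik)" using eq by simp
  moreover have "x$k * sik > 0" using xk sikp by simp
  ultimately have "x$i * sii < 0" by simp
  then show "x$i \<le> 0" using siip by (simp add: mult_less_0_iff)
qed

end

lemma measurable_vec:
  fixes f :: "'a \<Rightarrow> 'b::euclidean_space ^'n"
  assumes "\<And>i. (\<lambda>x. f x $ i) \<in> borel_measurable M"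
  shows "f \<in> borel_measurable M"
proof (subst borel_measurable_euclidean_space, intro ballI)
  fix b :: "'b^'n" assume "b \<in> Basis"
  then obtain i u where b: "b = axis i u" and u: "u \<in> Basis" by (auto simp: Basis_vec_def)
  have "(\<lambda>x. f x \<bullet> b) = (\<lambda>x. f x $ i \<bullet> u)" by (simp add: b inner_axis)
  moreover have "(\<lambda>x. f x $ i \<bullet> u) \<in> borel_measurable M"
    using assms[of i] by (intro borel_measurable_inner) auto
  ultimately show "(\<lambda>x. f x \<bullet> b) \<in> borel_measurable M" by simp
qed

lemma measurable_vec_nth:
  fixes f :: "'a \<Rightarrow> 'b::real_normed_vector ^'n"
  assumes "f \<in> borel_measurable M"
  shows "(\<lambda>x. f x $ i) \<in> borel_measurable M"
  using borel_measurable_continuous_on[OF _ assms, of "\<lambda>v. v $ i"]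
  by (simp add: continuous_on_component continuous_on_id)

lemma continuous_on_det: "continuous_on UNIV (det :: real^'n^'n \<Rightarrow> real)"
  unfolding det_def[abs_def] by (intro continuous_intros)

definition crf :: "(real^'k::finite^'k) \<times> (real^'k) \<Rightarrow> real^'k" where
  "crf p = (\<chi> k. det (\<chi> i j. if j = k then snd p $ i else fst p $ i $ j) / det (fst p))"

lemma continuous_on_detrep: "continuous_on UNIV (\<lambda>p::(real^'k^'k) \<times> (real^'k). det (\<chi> i j. if j = k then snd p $ i else fst p $ i $ j))"
proof -
  have "continuous_on UNIV (\<lambda>p::(real^'k^'k) \<times> (real^'k). (\<chi> i j. if j = k then snd p $ i else fst p $ i $ j) :: real^'k^'k)"
  proof (intro continuous_on_vec_lambda)
    fix i j show "continuous_on UNIV (\<lambda>p::(real^'k^'k) \<times> (real^'k). if j = k then snd p $ i else fst p $ i $ j)"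
      by (cases "j = k") (simp_all add: continuous_intros)
  qed
  then show ?thesis
    using continuous_on_compose2[OF continuous_on_det] by blast
qed

lemma crf_measurable: "(crf :: (real^'k^'k) \<times> (real^'k) \<Rightarrow> real^'k) \<in> borel_measurable borel"
  unfolding crf_def
proof (rule measurable_vec)
  fix k
  have m1: "(\<lambda>p::(real^'k^'k) \<times> (real^'k). det (\<chi> i j. if j = k then snd p $ i else fst p $ i $ j)) \<in> borel_measurable borel"
    by (rule borel_measurable_continuous_onI[OF continuous_on_detrep])
  have m2: "(\<lambda>p::(real^'k^'k) \<times> (real^'k). det (fst p)) \<in> borel_measurable borel"
    by (rule borel_measurable_continuous_onI)
       (rule continuous_on_compose2[OF continuous_on_det continuous_on_fst[OF continuous_on_id]]; simp)
  show "(\<lambda>x::(real^'k^'k) \<times> (real^'k). (\<chi> k. det (\<chi> i j. if j = k then snd x $ i else fst x $ i $ j) / det (fst x)) $ k) \<in> borel_measurable borel"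
    using borel_measurable_divide[OF m1 m2] by simp
qed

lemma crf_isCont:
  fixes G :: "real^'k^'k"
  assumes "det G \<noteq> 0"
  shows "isCont crf (G, r)"
proof -
  have c1: "isCont (\<lambda>p::(real^'k^'k) \<times> (real^'k). det (\<chi> i j. if j = k then snd p $ i else fst p $ i $ j)) (G, r)" for k
    using continuous_on_detrep[of k] by (simp add: continuous_on_eq_continuous_at)
  have c2: "isCont (\<lambda>p::(real^'k^'k) \<times> (real^'k). det (fst p)) (G, r)"
  proof -
    have "continuous_on UNIV (\<lambda>p::(real^'k^'k) \<times> (real^'k). det (fst p))"
      using continuous_on_compose2[OF continuous_on_det continuous_on_fst[OF continuous_on_id]] by simp
    then show ?thesis using continuous_on_eq_continuous_at[of UNIV] by auto
  qed
  show ?thesis unfolding crf_def isCont_def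
    by (intro tendsto_vec_lambda tendsto_divide c1[unfolded isCont_def] c2[unfolded isCont_def]) (simp add: assms)
qed

lemma crf_simp: "crf (G, r) = (\<chi> k. det (\<chi> i j. if j = k then r $ i else G $ i $ j) / det G)"
  unfolding crf_def fst_conv snd_conv ..

lemma crf_solves: "det G \<noteq> 0 \<Longrightarrow> G *v crf (G, r) = r"
  using cramer[of G "crf (G, r)" r] unfolding crf_simp by simp

lemma crf_unique: "det G \<noteq> 0 \<Longrightarrow> G *v x = r \<Longrightarrow> x = crf (G, r)"
  using cramer[of G x r] unfolding crf_simp by simp

lemma crf_sing: "det G = 0 \<Longrightarrow> crf (G, r) = 0"
  by (simp add: crf_def vec_eq_iff)

lemma invertible_right_inv: "invertible (A::real^'n^'n) \<Longrightarrow> A ** matrix_inv A = mat 1"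
  unfolding invertible_def matrix_inv_def by (rule someI2_ex) auto

lemma ols_coef_crf:
  "ols_coef R y N = crf ((\<Sum>i<N. outer_prod (R i)), (\<Sum>i<N. y i *\<^sub>R R i))"
proof -
  let ?G = "(\<Sum>i<N. outer_prod (R i))" and ?r = "(\<Sum>i<N. y i *\<^sub>R R i)"
  show ?thesis
  proof (cases "invertible ?G")
    case True
    then have d: "det ?G \<noteq> 0" by (simp add: invertible_det_nz)
    have "?G *v (matrix_inv ?G *v ?r) = ?r"
      using invertible_right_inv[OF True] by (simp add: matrix_vector_mul_assoc)
    then have "matrix_inv ?G *v ?r = crf (?G, ?r)" by (rule crf_unique[OF d])
    then show ?thesis unfolding ols_coef_def Let_def using True by simp
  next
    case False
    then have "det ?G = 0" by (simp add: invertible_det_nz)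
    then show ?thesis unfolding ols_coef_def Let_def using False crf_sing by simp
  qed
qed

lemma scaleR_mv: "(c *\<^sub>R G) *v x = c *\<^sub>R (G *v (x::real^'n))"
  by (simp add: vec_eq_iff matrix_vector_mult_def sum_distrib_left mult.assoc)

lemma crf_scale:
  fixes G :: "real^'k^'k"
  assumes c: "c \<noteq> 0"
  shows "crf (c *\<^sub>R G, c *\<^sub>R r) = crf (G, r)"
proof (cases "invertible G")
  case True
  then have d: "det G \<noteq> 0" by (simp add: invertible_det_nz)
  have "invertible (c *\<^sub>R G)" using scalar_invertible[OF c True] .
  then have d2: "det (c *\<^sub>R G) \<noteq> 0" by (simp add: invertible_det_nz)
  have "(c *\<^sub>R G) *v crf (G, r) = c *\<^sub>R r" using crf_solves[OF d] by (simp add: scaleR_mv)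
  then show ?thesis using crf_unique[OF d2] by metis
next
  case False
  have "\<not> invertible (c *\<^sub>R G)"
  proof
    assume "invertible (c *\<^sub>R G)"
    then have "invertible G" using scalar_invertible[of "inverse c" "c *\<^sub>R G"] c by simp
    then show False using False by simp
  qed
  then show ?thesis using False crf_sing[of G r] crf_sing[of "c *\<^sub>R G" "c *\<^sub>R r"] by (simp add: invertible_det_nz)
qed

lemma vec_sum_nth: "(\<Sum>i\<in>A. f i) $ a = (\<Sum>i\<in>A. f i $ a)"
  by (induction A rule: infinite_finite_induct) auto

lemma ols_plim:
  fixes R :: "nat \<Rightarrow> 'a \<Rightarrow> real^'k" and y :: "nat \<Rightarrow> 'a \<Rightarrow> real" and h :: "real^'k \<Rightarrow> 'c::metric_space"
  assumes P: "prob_space M"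
    and Rm: "\<And>i. R i \<in> borel_measurable M" and ym: "\<And>i. y i \<in> borel_measurable M"
    and GC: "\<And>a b. conv_in_prob M (\<lambda>N \<omega>. (\<Sum>i<N. R i \<omega> $ a * R i \<omega> $ b) / real N) (Gs $ a $ b)"
    and rC: "\<And>a. conv_in_prob M (\<lambda>N \<omega>. (\<Sum>i<N. y i \<omega> * R i \<omega> $ a) / real N) (rs $ a)"
    and d: "det Gs \<noteq> 0" and h: "continuous_on UNIV h"
  shows "conv_in_prob M (\<lambda>N \<omega>. h (ols_coef (\<lambda>i. R i \<omega>) (\<lambda>i. y i \<omega>) N)) (h (crf (Gs, rs)))"
proof -
  define Gh where "Gh = (\<lambda>N \<omega>. (\<chi> a b. (\<Sum>i<N. R i \<omega> $ a * R i \<omega> $ b) / real N) :: real^'k^'k)"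
  define rh where "rh = (\<lambda>N \<omega>. (\<chi> a. (\<Sum>i<N. y i \<omega> * R i \<omega> $ a) / real N) :: real^'k)"
  have eq: "ols_coef (\<lambda>i. R i \<omega>) (\<lambda>i. y i \<omega>) N = crf (Gh N \<omega>, rh N \<omega>)" for N \<omega>
  proof -
    let ?G = "(\<Sum>i<N. outer_prod (R i \<omega>))" and ?r = "(\<Sum>i<N. y i \<omega> *\<^sub>R R i \<omega>)"
    have o: "ols_coef (\<lambda>i. R i \<omega>) (\<lambda>i. y i \<omega>) N = crf (?G, ?r)" by (rule ols_coef_crf)
    have G: "Gh N \<omega> = inverse (real N) *\<^sub>R ?G"
      by (simp add: Gh_def vec_eq_iff vec_sum_nth outer_prod_def divide_inverse mult.commute)
    have r: "rh N \<omega> = inverse (real N) *\<^sub>R ?r"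
      by (simp add: rh_def vec_eq_iff vec_sum_nth divide_inverse mult.commute)
    show ?thesis
    proof (cases "N = 0")
      case True then show ?thesis using o G r by simp
    next
      case False
      then have "inverse (real N) \<noteq> 0" by simp
      then show ?thesis unfolding o G r by (rule crf_scale[symmetric])
    qed
  qed
  have Ghm: "Gh N \<in> borel_measurable M" for N
    unfolding Gh_def
    by (intro measurable_vec) (simp, intro borel_measurable_divide borel_measurable_sum borel_measurable_times
          measurable_vec_nth Rm borel_measurable_const)
  have rhm: "rh N \<in> borel_measurable M" for N
    unfolding rh_def
    by (intro measurable_vec) (simp, intro borel_measurable_divide borel_measurable_sum borel_measurable_times
          measurable_vec_nth Rm ym borel_measurable_const)
  have cG: "conv_in_prob M Gh Gs"
  proof (rule cip_vec[OF P Ghm])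
    fix a
    show "conv_in_prob M (\<lambda>N \<omega>. Gh N \<omega> $ a) (Gs $ a)"
    proof (rule cip_vec[OF P])
      show "(\<lambda>\<omega>. Gh N \<omega> $ a) \<in> borel_measurable M" for N by (rule measurable_vec_nth[OF Ghm])
      show "conv_in_prob M (\<lambda>N \<omega>. Gh N \<omega> $ a $ b) (Gs $ a $ b)" for b
        using GC[of a b] by (simp add: Gh_def)
    qed
  qed
  have cr: "conv_in_prob M rh rs"
  proof (rule cip_vec[OF P rhm])
    show "conv_in_prob M (\<lambda>N \<omega>. rh N \<omega> $ a) (rs $ a)" for a
      using rC[of a] by (simp add: rh_def)
  qed
  have cp: "conv_in_prob M (\<lambda>N \<omega>. (Gh N \<omega>, rh N \<omega>)) (Gs, rs)"
    by (rule cip_pair[OF P cG cr])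
  have ic: "isCont (\<lambda>p. h (crf p)) (Gs, rs)"
    using crf_isCont[OF d] h by (intro continuous_at_compose[unfolded comp_def, of _ crf h])
       (auto simp: continuous_on_eq_continuous_at)
  have gm: "(\<lambda>p. h (crf p)) \<in> borel_measurable borel"
    using measurable_comp[OF crf_measurable borel_measurable_continuous_onI[OF h]] by (simp add: comp_def)
  show ?thesis
    using cip_cont[OF P cp ic gm] by (simp add: eq)
qed

context prob_space begin

lemma indep_rv_comp:
  fixes U :: "'a \<Rightarrow> 'b::topological_space" and V :: "'a \<Rightarrow> 'c::topological_space"
    and f :: "'b \<Rightarrow> 'd::topological_space" and g :: "'c \<Rightarrow> 'e::topological_space"
  assumes iv: "indep_rv M U V" and f: "f \<in> borel_measurable borel" and g: "g \<in> borel_measurable borel"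
  shows "indep_rv M (\<lambda>\<omega>. f (U \<omega>)) (\<lambda>\<omega>. g (V \<omega>))"
  unfolding indep_rv_def
proof (intro conjI ballI)
  have Um: "U \<in> borel_measurable M" and Vm: "V \<in> borel_measurable M" and
    pr: "\<And>A B. A \<in> sets borel \<Longrightarrow> B \<in> sets borel \<Longrightarrow>
        measure M (U -` A \<inter> V -` B \<inter> space M) = measure M (U -` A \<inter> space M) * measure M (V -` B \<inter> space M)"
    using iv unfolding indep_rv_def by auto
  show "(\<lambda>\<omega>. f (U \<omega>)) \<in> borel_measurable M" using measurable_comp[OF Um f] by (simp add: comp_def)
  show "(\<lambda>\<omega>. g (V \<omega>)) \<in> borel_measurable M" using measurable_comp[OF Vm g] by (simp add: comp_def)
  fix A B assume A: "A \<in> sets (borel :: 'd measure)" and B: "B \<in> sets (borel :: 'e measure)"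
  have A': "f -` A \<in> sets borel" using measurable_sets[OF f A] by simp
  have B': "g -` B \<in> sets borel" using measurable_sets[OF g B] by simp
  have e1: "(\<lambda>\<omega>. f (U \<omega>)) -` A \<inter> (\<lambda>\<omega>. g (V \<omega>)) -` B \<inter> space M = U -` (f -` A) \<inter> V -` (g -` B) \<inter> space M" by auto
  have e2: "(\<lambda>\<omega>. f (U \<omega>)) -` A \<inter> space M = U -` (f -` A) \<inter> space M" by auto
  have e3: "(\<lambda>\<omega>. g (V \<omega>)) -` B \<inter> space M = V -` (g -` B) \<inter> space M" by auto
  show "measure M ((\<lambda>\<omega>. f (U \<omega>)) -` A \<inter> (\<lambda>\<omega>. g (V \<omega>)) -` B \<inter> space M) =
        measure M ((\<lambda>\<omega>. f (U \<omega>)) -` A \<inter> space M) * measure M ((\<lambda>\<omega>. g (V \<omega>)) -` B \<inter> space M)"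
    unfolding e1 e2 e3 by (rule pr[OF A' B'])
qed

lemma indep_rv_var:
  fixes U V :: "'a \<Rightarrow> 'b::topological_space"
  assumes iv: "indep_rv M U V"
  shows "indep_var borel U borel V"
proof -
  have Um: "U \<in> borel_measurable M" and Vm: "V \<in> borel_measurable M" and
    pr: "\<And>A B. A \<in> sets borel \<Longrightarrow> B \<in> sets borel \<Longrightarrow>
        measure M (U -` A \<inter> V -` B \<inter> space M) = measure M (U -` A \<inter> space M) * measure M (V -` B \<inter> space M)"
    using iv unfolding indep_rv_def by auto
  have Int_stable: "Int_stable {X -` A \<inter> space M |A. A \<in> sets S}" for S and X :: "'a \<Rightarrow> 'z"
  proof (safe intro!: Int_stableI)
    fix A B assume "A \<in> sets S" "B \<in> sets S"
    then show "\<exists>C. (X -` A \<inter> space M) \<inter> (X -` B \<inter> space M) = (X -` C \<inter> space M) \<and> C \<in> sets S"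
      by (intro exI[of _ "A \<inter> B"]) auto
  qed
  show ?thesis unfolding indep_var_eq
  proof (intro conjI indep_set_sigma_sets Int_stable Um Vm)
    show "indep_set {U -` A \<inter> space M |A. A \<in> sets borel} {V -` A \<inter> space M |A. A \<in> sets borel}"
    proof (safe intro!: indep_setI)
      { fix A :: "'b set" assume "A \<in> sets borel" then show "U -` A \<inter> space M \<in> sets M"
        using Um by (auto intro: measurable_sets) }
      { fix A :: "'b set" assume "A \<in> sets borel" then show "V -` A \<inter> space M \<in> sets M"
        using Vm by (auto intro: measurable_sets) }
    next
      fix A B assume ab: "A \<in> sets (borel :: 'b measure)" "B \<in> sets (borel :: 'b measure)"
      have "(U -` A \<inter> space M) \<inter> (V -` B \<inter> space M) = U -` A \<inter> V -` B \<inter> space M" by auto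
      then show "prob ((U -` A \<inter> space M) \<inter> (V -` B \<inter> space M)) = prob (U -` A \<inter> space M) * prob (V -` B \<inter> space M)"
        using pr[OF ab] by simp
    qed
  qed
qed

lemma indep_rcov0:
  fixes E :: "'a \<Rightarrow> real^'d" and T :: "'a \<Rightarrow> 'c::topological_space"
  assumes iv: "indep_rv M E T" and phi: "\<phi> \<in> borel_measurable borel"
    and s1: "sqi M (\<lambda>\<omega>. E \<omega> $ k)" and s2: "sqi M (\<lambda>\<omega>. \<phi> (T \<omega>))"
  shows "rcov M (\<lambda>\<omega>. E \<omega> $ k) (\<lambda>\<omega>. \<phi> (T \<omega>)) = 0"
proof -
  have "(\<lambda>v::real^'d. v $ k) \<in> borel_measurable borel"
    by (rule borel_measurable_continuous_onI) (simp add: continuous_on_component continuous_on_id)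
  then have "indep_rv M (\<lambda>\<omega>. E \<omega> $ k) (\<lambda>\<omega>. \<phi> (T \<omega>))"
    by (rule indep_rv_comp[OF iv _ phi])
  then have iv2: "indep_var borel (\<lambda>\<omega>. E \<omega> $ k) borel (\<lambda>\<omega>. \<phi> (T \<omega>))" by (rule indep_rv_var)
  have "(\<integral>\<omega>. E \<omega> $ k * \<phi> (T \<omega>) \<partial>M) = (\<integral>\<omega>. E \<omega> $ k \<partial>M) * (\<integral>\<omega>. \<phi> (T \<omega>) \<partial>M)"
    by (rule indep_var_lebesgue_integral[OF iv2 sqi_integrable[OF s1] sqi_integrable[OF s2]])
  then show ?thesis unfolding rcov_def by simp
qed

lemma rcov_cong_right:
  assumes e: "\<And>\<omega>. \<omega> \<in> space M \<Longrightarrow> g \<omega> = g' \<omega>"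
  shows "rcov M f g = rcov M f g'"
proof -
  have "(\<integral>\<omega>. f \<omega> * g \<omega> \<partial>M) = (\<integral>\<omega>. f \<omega> * g' \<omega> \<partial>M)"
    by (rule Bochner_Integration.integral_cong) (simp_all add: e)
  moreover have "(\<integral>\<omega>. g \<omega> \<partial>M) = (\<integral>\<omega>. g' \<omega> \<partial>M)"
    by (rule Bochner_Integration.integral_cong) (simp_all add: e)
  ultimately show ?thesis unfolding rcov_def by simp
qed

lemma sqi_cong:
  assumes e: "\<And>\<omega>. \<omega> \<in> space M \<Longrightarrow> g \<omega> = g' \<omega>" and m: "g' \<in> borel_measurable M" and s: "sqi M g"
  shows "sqi M g'"
proof -
  have "integrable M (\<lambda>\<omega>. (g \<omega>)^2) = integrable M (\<lambda>\<omega>. (g' \<omega>)^2)"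
    by (rule Bochner_Integration.integrable_cong) (simp_all add: e)
  then show ?thesis using s m unfolding sqi_def by simp
qed

end

lemma mom_good:
  fixes D :: "nat \<Rightarrow> 'a \<Rightarrow> 't" and D0 :: "'a \<Rightarrow> 't"
  assumes P: "prob_space M"
    and Dm: "\<And>i f. f \<in> F \<Longrightarrow> (\<lambda>\<omega>. f (D i \<omega>)) \<in> borel_measurable M"
    and m1: "\<forall>f\<in>F. conv_in_prob M (\<lambda>N \<omega>. (\<Sum>i<N. f (D i \<omega>)) / real N) (\<integral>\<omega>. f (D0 \<omega>) \<partial>M)"
    and m2: "\<forall>f\<in>F. \<forall>g\<in>F. conv_in_prob M (\<lambda>N \<omega>. (\<Sum>i<N. f (D i \<omega>) * g (D i \<omega>)) / real N) (\<integral>\<omega>. f (D0 \<omega>) * g (D0 \<omega>) \<partial>M)"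
    and h: "h = (\<lambda>_. 1) \<or> h \<in> F" and g: "g = (\<lambda>_. 1) \<or> g \<in> F"
  shows "conv_in_prob M (\<lambda>N \<omega>. (\<Sum>i<N. h (D i \<omega>) * g (D i \<omega>)) / real N) (\<integral>\<omega>. h (D0 \<omega>) * g (D0 \<omega>) \<partial>M)"
proof -
  interpret prob_space M by fact
  show ?thesis
  proof (cases "h = (\<lambda>_. 1)")
    case h1: True
    show ?thesis
    proof (cases "g = (\<lambda>_. 1)")
      case True
      have "conv_in_prob M (\<lambda>N \<omega>. real N / real N) 1"
      proof (rule cip_eventually_const[OF P, of _ 1])
        show "(\<lambda>\<omega>. real N / real N) \<in> borel_measurable M" for N by simp
        show "real N / real N = 1" if "N \<ge> 1" for N using that by simp
      qed
      then show ?thesis unfolding h1 True by (simp add: prob_space)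
    next
      case False
      then have "g \<in> F" using g by blast
      then show ?thesis using m1 unfolding h1 by simp
    qed
  next
    case False
    then have hF: "h \<in> F" using h by blast
    show ?thesis
    proof (cases "g = (\<lambda>_. 1)")
      case True
      show ?thesis using m1 hF unfolding True by simp
    next
      case False
      then have "g \<in> F" using g by blast
      then show ?thesis using m2 hF by simp
    qed
  qed
qed

definition psi :: "((1 + 'p) + 'd) \<Rightarrow> real \<times> (real^'p) \<times> (real^'d) \<times> (real^'d) \<Rightarrow> real" where
  "psi a t = (case a of Inl (Inl _) \<Rightarrow> 1 | Inl (Inr p) \<Rightarrow> fst (snd t) $ p | Inr j \<Rightarrow> snd (snd (snd t)) $ j)"

lemma vcat_nth[simp]: "vcat x y $ Inl i = x $ i" "vcat x y $ Inr j = y $ j"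
  by (simp_all add: vcat_def)

lemma R_psi: "vcat (vcat (vec 1 :: real^1) z) w $ a = psi a (y, z, x, w)"
  by (cases a rule: sum.exhaust; auto simp: psi_def split: sum.split)

lemma psi_good: "psi a = (\<lambda>_. 1) \<or> psi a \<in> coord_funs"
proof (cases a)
  case (Inl b)
  show ?thesis
  proof (cases b)
    case (Inl u) then show ?thesis using \<open>a = Inl b\<close> by (auto simp: psi_def[abs_def])
  next
    case (Inr p)
    have "psi a = (\<lambda>t. fst (snd t) $ p)" using \<open>a = Inl b\<close> Inr by (auto simp: psi_def[abs_def])
    then show ?thesis unfolding coord_funs_def by auto
  qed
next
  case (Inr j)
  have "psi a = (\<lambda>t. snd (snd (snd t)) $ j)" using Inr by (auto simp: psi_def[abs_def])
  then show ?thesis unfolding coord_funs_def by auto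
qed

lemma sum_UNIV_plus: "(\<Sum>x\<in>(UNIV :: ('a::finite + 'b::finite) set). f x) = (\<Sum>x\<in>UNIV. f (Inl x)) + (\<Sum>x\<in>UNIV. f (Inr x))"
  using sum.Plus[of "UNIV :: 'a set" "UNIV :: 'b set" f] by (simp add: comp_def)

lemma pop:
  fixes M :: "'a measure"
    and Y :: "'a \<Rightarrow> real" and Z :: "'a \<Rightarrow> real^'p" and X W :: "'a \<Rightarrow> real^'d"
    and \<alpha> :: real and \<beta>Z :: "real^'p" and \<beta>X :: "real^'d"
    and E :: "'a \<Rightarrow> real^'d" and a :: "real^'d" and j0 :: 'd
  assumes P: "prob_space M"
    and meas: "Y \<in> borel_measurable M" "Z \<in> borel_measurable M"
              "X \<in> borel_measurable M" "W \<in> borel_measurable M"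
    and sq: "integrable M (\<lambda>\<omega>. (Y \<omega>)^2)" "\<forall>j. integrable M (\<lambda>\<omega>. (Z \<omega> $ j)^2)"
            "\<forall>j. integrable M (\<lambda>\<omega>. (X \<omega> $ j)^2)" "\<forall>j. integrable M (\<lambda>\<omega>. (W \<omega> $ j)^2)"
    and argmin: "\<forall>a' bZ bX.
        (\<integral>\<omega>. (1/2) * (Y \<omega> - \<alpha> - Z \<omega> \<bullet> \<beta>Z - X \<omega> \<bullet> \<beta>X)^2 \<partial>M)
        \<le> (\<integral>\<omega>. (1/2) * (Y \<omega> - a' - Z \<omega> \<bullet> bZ - X \<omega> \<bullet> bX)^2 \<partial>M)"
    and pdZX: "pos_def_mat (cov_mat M (\<lambda>\<omega>. vcat (Z \<omega>) (X \<omega>)))"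
    and pairwise_PC: "\<forall>j j'. j \<noteq> j' \<longrightarrow>
        partial_corr M (UNIV - {Inr j, Inr j'}) (\<lambda>k \<omega>. vcat (Z \<omega>) (X \<omega>) $ k)
          (\<lambda>\<omega>. X \<omega> $ j) (\<lambda>\<omega>. X \<omega> $ j') > 0"
    and cume_W: "\<forall>\<omega>\<in>space M. W \<omega> = X \<omega> + E \<omega>"
    and cume_meas: "E \<in> borel_measurable M"
    and cume_indep: "indep_rv M E (\<lambda>\<omega>. (Z \<omega>, X \<omega>, Y \<omega>))"
    and cume_cov: "cov_mat M E = (\<chi> i j. if i = j then a $ i else 0)"
    and cume_nonneg: "\<forall>j. a $ j \<ge> 0"
    and no_benefit: "\<forall>j. \<beta>X $ j \<le> 0"
    and zero: "\<beta>X $ j0 = 0"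
  defines "Gs \<equiv> (\<chi> a b. \<integral>\<omega>. psi a (Y \<omega>, Z \<omega>, X \<omega>, W \<omega>) * psi b (Y \<omega>, Z \<omega>, X \<omega>, W \<omega>) \<partial>M)"
    and "rs \<equiv> (\<chi> a. \<integral>\<omega>. fst (Y \<omega>, Z \<omega>, X \<omega>, W \<omega>) * psi a (Y \<omega>, Z \<omega>, X \<omega>, W \<omega>) \<partial>M)"
  shows "det Gs \<noteq> 0 \<and> (\<forall>\<theta>. Gs *v \<theta> = rs \<longrightarrow> \<theta> $ Inr j0 \<le> \<beta>X $ j0)"
proof -
  interpret prob_space M by fact
  have sY: "sqi M Y" using meas sq by (simp add: sqi_def)
  have sZ: "sqi M (\<lambda>\<omega>. Z \<omega> $ p)" for p using meas(2) sq(2) by (simp add: sqi_def measurable_vec_nth)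
  have sX: "sqi M (\<lambda>\<omega>. X \<omega> $ j)" for j using meas(3) sq(3) by (simp add: sqi_def measurable_vec_nth)
  have sW: "sqi M (\<lambda>\<omega>. W \<omega> $ j)" for j using meas(4) sq(4) by (simp add: sqi_def measurable_vec_nth)
  have sE: "sqi M (\<lambda>\<omega>. E \<omega> $ j)" for j
    by (rule sqi_cong[OF _ measurable_vec_nth[OF cume_meas] sqi_diff[OF sW sX, of j j]]) (simp add: cume_W)
  define V where "V = (\<lambda>\<omega>. vcat (Z \<omega>) (X \<omega>))"
  define U where "U = (\<lambda>\<omega>. vcat (Z \<omega>) (W \<omega>))"
  define eL where "eL = (\<lambda>(l::'p + 'd) \<omega>. case l of Inl _ \<Rightarrow> 0 | Inr j \<Rightarrow> E \<omega> $ j)"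
  have sV: "sqi M (\<lambda>\<omega>. V \<omega> $ l)" for l by (cases l) (simp_all add: V_def sZ sX)
  have sU: "sqi M (\<lambda>\<omega>. U \<omega> $ l)" for l by (cases l) (simp_all add: U_def sZ sW)
  have seL: "sqi M (eL l)" for l by (cases l) (simp_all add: eL_def sE)
  have UV: "\<And>\<omega>. \<omega> \<in> space M \<Longrightarrow> U \<omega> $ l = V \<omega> $ l + eL l \<omega>" for l
    by (cases l) (simp_all add: U_def V_def eL_def cume_W)
  have rcov0L: "rcov M (\<lambda>_. 0) g = 0" for g by (simp add: rcov_comm rcov_const_right)
  have iT: "rcov M (\<lambda>\<omega>. E \<omega> $ k) (\<lambda>\<omega>. \<phi> (Z \<omega>, X \<omega>, Y \<omega>)) = 0"
    if "\<phi> \<in> borel_measurable borel" "sqi M (\<lambda>\<omega>. \<phi> (Z \<omega>, X \<omega>, Y \<omega>))" for k and \<phi> :: "(real^'p) \<times> (real^'d) \<times> real \<Rightarrow> real"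
    using indep_rcov0[OF cume_indep that(1) sE that(2)] .
  have iV: "rcov M (eL l) (\<lambda>\<omega>. V \<omega> $ m) = 0" for l m
  proof (cases l)
    case (Inl u) then show ?thesis by (simp add: eL_def rcov0L)
  next
    case (Inr k)
    show ?thesis
    proof (cases m)
      case (Inl p)
      have "rcov M (\<lambda>\<omega>. E \<omega> $ k) (\<lambda>\<omega>. (\<lambda>t. fst t $ p) (Z \<omega>, X \<omega>, Y \<omega>)) = 0"
        by (rule iT) (auto intro!: borel_measurable_continuous_onI continuous_intros simp: sZ)
      then show ?thesis using Inr Inl by (simp add: eL_def V_def)
    next
      case (Inr j)
      have "rcov M (\<lambda>\<omega>. E \<omega> $ k) (\<lambda>\<omega>. (\<lambda>t. fst (snd t) $ j) (Z \<omega>, X \<omega>, Y \<omega>)) = 0"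
        by (rule iT) (auto intro!: borel_measurable_continuous_onI continuous_intros simp: sX)
      then show ?thesis using \<open>l = Inr k\<close> Inr by (simp add: eL_def V_def)
    qed
  qed
  define \<beta> where "\<beta> = vcat \<beta>Z \<beta>X"
  define eps where "eps = (\<lambda>\<omega>. Y \<omega> - \<alpha> - Z \<omega> \<bullet> \<beta>Z - X \<omega> \<bullet> \<beta>X)"
  have innerV: "Z \<omega> \<bullet> bZ + X \<omega> \<bullet> bX = (\<Sum>m\<in>UNIV. vcat bZ bX $ m * V \<omega> $ m)" for \<omega> bZ bX
    by (simp add: inner_vec_def sum_UNIV_plus V_def mult.commute)
  have eps_lin: "eps = (\<lambda>\<omega>. Y \<omega> - (\<alpha> + (\<Sum>m\<in>UNIV. \<beta> $ m * V \<omega> $ m)))"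
    unfolding eps_def \<beta>_def using innerV by (simp add: algebra_simps)
  have seps: "sqi M eps" unfolding eps_lin using sY sV by (intro sqi_diff sqi_add sqi_sum sqi_scale) auto
  have ieps: "rcov M (eL l) eps = 0" for l
  proof (cases l)
    case (Inl u) then show ?thesis by (simp add: eL_def rcov0L)
  next
    case (Inr k)
    let ?\<phi> = "\<lambda>t::(real^'p) \<times> (real^'d) \<times> real. snd (snd t) - \<alpha> - fst t \<bullet> \<beta>Z - fst (snd t) \<bullet> \<beta>X"
    have "rcov M (\<lambda>\<omega>. E \<omega> $ k) (\<lambda>\<omega>. ?\<phi> (Z \<omega>, X \<omega>, Y \<omega>)) = 0"
      by (rule iT) (auto intro!: borel_measurable_continuous_onI continuous_intros simp: seps[unfolded eps_def])
    then show ?thesis using Inr by (simp add: eL_def eps_def)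
  qed
  define dd where "dd = (\<lambda>l::'p + 'd. case l of Inl _ \<Rightarrow> 0 | Inr j \<Rightarrow> a $ j)"
  have eE: "rcov M (eL l) (eL m) = (if l = m then dd l else 0)" for l m
  proof (cases l)
    case (Inl u) then show ?thesis by (auto simp: eL_def rcov0L dd_def)
  next
    case (Inr k)
    show ?thesis
    proof (cases m)
      case (Inl p) then show ?thesis using Inr by (simp add: eL_def rcov_const_right)
    next
      case (Inr j)
      have "rcov M (\<lambda>\<omega>. E \<omega> $ k) (\<lambda>\<omega>. E \<omega> $ j) = cov_mat M E $ k $ j" by (simp add: cov_mat_def)
      then show ?thesis using \<open>l = Inr k\<close> Inr cume_cov by (simp add: eL_def dd_def)
    qed
  qed
  have covU: "rcov M (\<lambda>\<omega>. U \<omega> $ l) (\<lambda>\<omega>. U \<omega> $ m) = rcov M (\<lambda>\<omega>. V \<omega> $ l) (\<lambda>\<omega>. V \<omega> $ m) + (if l = m then dd l else 0)" for l m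
  proof -
    have "rcov M (\<lambda>\<omega>. U \<omega> $ l) (\<lambda>\<omega>. U \<omega> $ m) = rcov M (\<lambda>\<omega>. U \<omega> $ l) (\<lambda>\<omega>. V \<omega> $ m + eL m \<omega>)"
      by (rule rcov_cong_right) (simp add: UV)
    also have "\<dots> = rcov M (\<lambda>\<omega>. V \<omega> $ m + eL m \<omega>) (\<lambda>\<omega>. V \<omega> $ l + eL l \<omega>)"
      by (subst rcov_comm, rule rcov_cong_right) (simp add: UV)
    also have "\<dots> = rcov M (\<lambda>\<omega>. V \<omega> $ m + eL m \<omega>) (\<lambda>\<omega>. V \<omega> $ l) + rcov M (\<lambda>\<omega>. V \<omega> $ m + eL m \<omega>) (eL l)"
      using sV seL by (intro rcov_add_right) auto
    also have "rcov M (\<lambda>\<omega>. V \<omega> $ m + eL m \<omega>) (\<lambda>\<omega>. V \<omega> $ l) = rcov M (\<lambda>\<omega>. V \<omega> $ l) (\<lambda>\<omega>. V \<omega> $ m) + rcov M (\<lambda>\<omega>. V \<omega> $ l) (eL m)"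
      using sV seL by (subst rcov_comm, intro rcov_add_right) auto
    also have "rcov M (\<lambda>\<omega>. V \<omega> $ m + eL m \<omega>) (eL l) = rcov M (eL l) (\<lambda>\<omega>. V \<omega> $ m) + rcov M (eL l) (eL m)"
      using sV seL by (subst rcov_comm, intro rcov_add_right) auto
    finally show ?thesis using iV[of m l] iV[of l m] eE[of l m] by (simp add: rcov_comm[of _ "eL m"])
  qed
  define S where "S = cov_mat M V"
  define S' where "S' = cov_mat M U"
  define J where "J = range (Inr :: 'd \<Rightarrow> 'p + 'd)"
  have S'eq: "S' = S + diagm J dd"
    unfolding S'_def S_def J_def
    by (auto simp: vec_eq_iff cov_mat_def diagm_def covU dd_def split: sum.split)
  have pdS: "pos_def_mat S" using pdZX unfolding S_def V_def .
  have npS: "neg_prec J S" unfolding S_def J_def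
  proof (rule pc_neg_prec[OF sV pdS[unfolded S_def]])
    fix i k assume "i \<in> range (Inr :: 'd \<Rightarrow> 'p + 'd)" "k \<in> range (Inr :: 'd \<Rightarrow> 'p + 'd)" "i \<noteq> k"
    then obtain j j' where ij: "i = Inr j" "k = Inr j'" "j \<noteq> j'" by auto
    show "partial_corr M (UNIV - {i, k}) (\<lambda>l \<omega>. V \<omega> $ l) (\<lambda>\<omega>. V \<omega> $ i) (\<lambda>\<omega>. V \<omega> $ k) > 0"
      using pairwise_PC ij by (simp add: V_def)
  qed
  have dI: "pos_def_mat S' \<and> neg_prec J S'"
    unfolding S'eq by (rule diag_induct[OF pdS npS subset_refl]) (auto simp: J_def dd_def cume_nonneg)
  have argm: "(\<integral>\<omega>. (eps \<omega>)^2 \<partial>M) \<le> (\<integral>\<omega>. (Y \<omega> - a' - Z \<omega> \<bullet> bZ - X \<omega> \<bullet> bX)^2 \<partial>M)" for a' bZ bX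
    using argmin[rule_format, of a' bZ bX] unfolding eps_def by simp
  have orth: "(\<integral>\<omega>. eps \<omega> * w \<omega> \<partial>M) = 0"
    if w: "sqi M w" and sh: "\<And>t. \<exists>a' bZ bX. \<forall>\<omega>. Y \<omega> - a' - Z \<omega> \<bullet> bZ - X \<omega> \<bullet> bX = eps \<omega> - t * w \<omega>" for w
  proof (rule quad_min)
    fix t
    obtain a' bZ bX where e: "\<forall>\<omega>. Y \<omega> - a' - Z \<omega> \<bullet> bZ - X \<omega> \<bullet> bX = eps \<omega> - t * w \<omega>" using sh by blast
    have "(\<integral>\<omega>. (eps \<omega>)^2 \<partial>M) \<le> (\<integral>\<omega>. (eps \<omega> - t * w \<omega>)^2 \<partial>M)" using argm[of a' bZ bX] e by simp
    then show "(\<integral>\<omega>. (eps \<omega>)^2 \<partial>M) \<le> (\<integral>\<omega>. (eps \<omega>)^2 \<partial>M) - 2 * t * (\<integral>\<omega>. eps \<omega> * w \<omega> \<partial>M) + t^2 * (\<integral>\<omega>. (w \<omega>)^2 \<partial>M)"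
      using sq_expand[OF seps w] by simp
    show "(\<integral>\<omega>. (w \<omega>)^2 \<partial>M) \<ge> 0" by simp
  qed
  have "(\<integral>\<omega>. eps \<omega> * 1 \<partial>M) = 0"
  proof (rule orth)
    show "sqi M (\<lambda>_. 1)" by simp
    fix t show "\<exists>a' bZ bX. \<forall>\<omega>. Y \<omega> - a' - Z \<omega> \<bullet> bZ - X \<omega> \<bullet> bX = eps \<omega> - t * 1"
      by (rule exI[of _ "\<alpha> + t"], rule exI[of _ \<beta>Z], rule exI[of _ \<beta>X]) (simp add: eps_def algebra_simps)
  qed
  then have Eeps: "(\<integral>\<omega>. eps \<omega> \<partial>M) = 0" by simp
  have EepsV: "(\<integral>\<omega>. eps \<omega> * V \<omega> $ l \<partial>M) = 0" for l
  proof (cases l)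
    case (Inl p)
    have "(\<integral>\<omega>. eps \<omega> * Z \<omega> $ p \<partial>M) = 0"
    proof (rule orth[OF sZ])
      fix t show "\<exists>a' bZ bX. \<forall>\<omega>. Y \<omega> - a' - Z \<omega> \<bullet> bZ - X \<omega> \<bullet> bX = eps \<omega> - t * Z \<omega> $ p"
        by (rule exI[of _ \<alpha>], rule exI[of _ "\<beta>Z + t *\<^sub>R axis p 1"], rule exI[of _ \<beta>X])
           (simp add: eps_def inner_add_right inner_axis algebra_simps)
    qed
    then show ?thesis using Inl by (simp add: V_def)
  next
    case (Inr j)
    have "(\<integral>\<omega>. eps \<omega> * X \<omega> $ j \<partial>M) = 0"
    proof (rule orth[OF sX])
      fix t show "\<exists>a' bZ bX. \<forall>\<omega>. Y \<omega> - a' - Z \<omega> \<bullet> bZ - X \<omega> \<bullet> bX = eps \<omega> - t * X \<omega> $ j"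
        by (rule exI[of _ \<alpha>], rule exI[of _ \<beta>Z], rule exI[of _ "\<beta>X + t *\<^sub>R axis j 1"])
           (simp add: eps_def inner_add_right inner_axis algebra_simps)
    qed
    then show ?thesis using Inr by (simp add: V_def)
  qed
  have Veps: "rcov M (\<lambda>\<omega>. V \<omega> $ l) eps = 0" for l
    unfolding rcov_def using EepsV[of l] Eeps by (simp add: mult.commute)
  define D0 where "D0 = (\<lambda>\<omega>. (Y \<omega>, Z \<omega>, X \<omega>, W \<omega>))"
  have spsi: "sqi M (\<lambda>\<omega>. psi b (D0 \<omega>))" for b
  proof (cases b)
    case (Inl c) then show ?thesis by (cases c) (simp_all add: psi_def D0_def sZ)
  next
    case (Inr j) then show ?thesis by (simp add: psi_def D0_def sW)
  qed
  define F where "F = (\<lambda>\<theta> \<omega>. \<Sum>b\<in>UNIV. \<theta> $ b * psi b (D0 \<omega>))"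
  define \<gamma> where "\<gamma> = (\<lambda>\<theta>::real^((1 + 'p) + 'd). (\<chi> l. case l of Inl p \<Rightarrow> \<theta> $ Inl (Inr p) | Inr j \<Rightarrow> \<theta> $ Inr j) :: real^('p + 'd))"
  have sF: "sqi M (F \<theta>)" for \<theta> unfolding F_def using spsi by (intro sqi_sum sqi_scale) auto
  have gram: "(Gs *v \<theta>) $ c = (\<integral>\<omega>. psi c (D0 \<omega>) * F \<theta> \<omega> \<partial>M)" for \<theta> c
  proof -
    have "(Gs *v \<theta>) $ c = (\<Sum>b\<in>UNIV. (\<integral>\<omega>. psi c (D0 \<omega>) * psi b (D0 \<omega>) \<partial>M) * \<theta> $ b)"
      by (simp add: Gs_def matrix_vector_mult_def D0_def)
    also have "\<dots> = (\<Sum>b\<in>UNIV. (\<integral>\<omega>. \<theta> $ b * (psi c (D0 \<omega>) * psi b (D0 \<omega>)) \<partial>M))"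
      by (simp add: mult.commute)
    also have "\<dots> = (\<integral>\<omega>. (\<Sum>b\<in>UNIV. \<theta> $ b * (psi c (D0 \<omega>) * psi b (D0 \<omega>))) \<partial>M)"
      by (rule Bochner_Integration.integral_sum[symmetric]) (auto intro: sqi_mult spsi)
    also have "\<dots> = (\<integral>\<omega>. psi c (D0 \<omega>) * F \<theta> \<omega> \<partial>M)"
      unfolding F_def by (simp add: sum_distrib_left algebra_simps)
    finally show ?thesis .
  qed
  have Fform: "F \<theta> \<omega> = \<theta> $ Inl (Inl 1) + (\<Sum>l\<in>UNIV. \<gamma> \<theta> $ l * U \<omega> $ l)" for \<theta> \<omega>
    unfolding F_def \<gamma>_def U_def by (simp add: sum_UNIV_plus UNIV_1 psi_def D0_def)
  have rowvanish: "(\<integral>\<omega>. H \<omega> \<partial>M) = 0 \<and> (\<forall>l. rcov M (\<lambda>\<omega>. U \<omega> $ l) H = 0)"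
    if sH: "sqi M H" and h0: "\<And>c. (\<integral>\<omega>. psi c (D0 \<omega>) * H \<omega> \<partial>M) = 0" for H
  proof -
    have EH: "(\<integral>\<omega>. H \<omega> \<partial>M) = 0" using h0[of "Inl (Inl 1)"] by (simp add: psi_def)
    have "(\<integral>\<omega>. U \<omega> $ l * H \<omega> \<partial>M) = 0" for l
    proof (cases l)
      case (Inl p) then show ?thesis using h0[of "Inl (Inr p)"] by (simp add: psi_def D0_def U_def)
    next
      case (Inr j) then show ?thesis using h0[of "Inr j"] by (simp add: psi_def D0_def U_def)
    qed
    then show ?thesis using EH unfolding rcov_def by simp
  qed
  have rcovUF: "rcov M (\<lambda>\<omega>. U \<omega> $ l) (F \<theta>) = (S' *v \<gamma> \<theta>) $ l" for \<theta> l
  proof -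
    have "rcov M (\<lambda>\<omega>. U \<omega> $ l) (F \<theta>) = rcov M (\<lambda>\<omega>. U \<omega> $ l) (\<lambda>\<omega>. \<theta> $ Inl (Inl 1) + (\<Sum>m\<in>UNIV. \<gamma> \<theta> $ m * U \<omega> $ m))"
      by (simp add: Fform[abs_def])
    also have "\<dots> = (\<Sum>m\<in>UNIV. \<gamma> \<theta> $ m * rcov M (\<lambda>\<omega>. U \<omega> $ l) (\<lambda>\<omega>. U \<omega> $ m))"
      using sU by (subst rcov_lin_right) auto
    also have "\<dots> = (S' *v \<gamma> \<theta>) $ l"
      by (simp add: S'_def cov_mat_def matrix_vector_mult_def mult.commute)
    finally show ?thesis .
  qed
  have pdS': "pos_def_mat S'" and npS': "neg_prec J S'" using dI by auto
  have injG: "inj ((*v) Gs)"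
  proof (rule linear_injective_0[THEN iffD2])
    show "linear ((*v) Gs)" by simp
    show "\<forall>v. Gs *v v = 0 \<longrightarrow> v = 0"
    proof (intro allI impI)
      fix v assume v0: "Gs *v v = 0"
      have h0: "(\<integral>\<omega>. psi c (D0 \<omega>) * F v \<omega> \<partial>M) = 0" for c
        using gram[of v c] v0 by simp
      from rowvanish[OF sF h0] have EF: "(\<integral>\<omega>. F v \<omega> \<partial>M) = 0"
        and rc: "\<And>l. rcov M (\<lambda>\<omega>. U \<omega> $ l) (F v) = 0" by auto
      have "S' *v \<gamma> v = 0" using rc rcovUF by (simp add: vec_eq_iff)
      then have g0: "\<gamma> v = 0" using pd_inj[OF pdS'] unfolding inj_def by (metis matrix_vector_mult_0_right)
      have "F v = (\<lambda>\<omega>. v $ Inl (Inl 1))" using g0 by (simp add: Fform[abs_def])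
      then have v1: "v $ Inl (Inl 1) = 0" using EF by (simp add: prob_space)
      show "v = 0"
      proof (subst vec_eq_iff, intro allI)
        fix x :: "(1 + 'p) + 'd"
        show "v $ x = 0 $ x"
        proof (cases x)
          case (Inl y)
          show ?thesis
          proof (cases y)
            case (Inl u)
            have "u = 1" by (rule num1_eq1)
            then show ?thesis using v1 \<open>x = Inl y\<close> Inl by (metis zero_index)
          next
            case (Inr p) then show ?thesis using g0 \<open>x = Inl y\<close> by (simp add: \<gamma>_def vec_eq_iff) (metis sum.simps(5))
          qed
        next
          case (Inr j) then show ?thesis using g0 by (simp add: \<gamma>_def vec_eq_iff) (metis sum.simps(6))
        qed
      qed
    qed
  qed
  have detG: "det Gs \<noteq> 0"
    using injG by (simp add: invertible_det_nz[symmetric] invertible_left_inverse matrix_left_invertible_injective)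
  have rcovU: "rcov M (\<lambda>\<omega>. U \<omega> $ l) g = rcov M (\<lambda>\<omega>. V \<omega> $ l) g + rcov M (eL l) g" if sg: "sqi M g" for l g
  proof -
    have "rcov M (\<lambda>\<omega>. U \<omega> $ l) g = rcov M g (\<lambda>\<omega>. V \<omega> $ l + eL l \<omega>)"
      by (subst rcov_comm, rule rcov_cong_right) (simp add: UV)
    also have "\<dots> = rcov M g (\<lambda>\<omega>. V \<omega> $ l) + rcov M g (eL l)"
      using sg sV seL by (intro rcov_add_right) auto
    finally show ?thesis by (simp add: rcov_comm)
  qed
  have main: "\<theta> $ Inr j0 \<le> \<beta>X $ j0" if eq: "Gs *v \<theta> = rs" for \<theta>
  proof -
    define \<eta> where "\<eta> = (\<lambda>\<omega>. Y \<omega> - F \<theta> \<omega>)"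
    have s\<eta>: "sqi M \<eta>" unfolding \<eta>_def using sY sF by (intro sqi_diff) auto
    have h0: "(\<integral>\<omega>. psi c (D0 \<omega>) * \<eta> \<omega> \<partial>M) = 0" for c
    proof -
      have "(\<integral>\<omega>. psi c (D0 \<omega>) * \<eta> \<omega> \<partial>M) = (\<integral>\<omega>. psi c (D0 \<omega>) * Y \<omega> \<partial>M) - (\<integral>\<omega>. psi c (D0 \<omega>) * F \<theta> \<omega> \<partial>M)"
        unfolding \<eta>_def right_diff_distrib
        by (rule Bochner_Integration.integral_diff) (auto intro: sqi_mult spsi sY sF)
      also have "(\<integral>\<omega>. psi c (D0 \<omega>) * Y \<omega> \<partial>M) = rs $ c"
        by (simp add: rs_def D0_def mult.commute)
      also have "(\<integral>\<omega>. psi c (D0 \<omega>) * F \<theta> \<omega> \<partial>M) = rs $ c" using gram[of \<theta> c] eq by simp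
      finally show ?thesis by simp
    qed
    have r\<eta>: "rcov M (\<lambda>\<omega>. U \<omega> $ l) \<eta> = 0" for l using rowvanish[OF s\<eta> h0] by auto
    have rUY: "rcov M (\<lambda>\<omega>. U \<omega> $ l) Y = (S' *v \<gamma> \<theta>) $ l" for l
      using r\<eta>[of l] rcovUF[of l \<theta>] rcov_diff_right[OF sU sY sF, of l \<theta>] unfolding \<eta>_def by simp
    have rUY2: "rcov M (\<lambda>\<omega>. U \<omega> $ l) Y = (S *v \<beta>) $ l" for l
    proof -
      have "rcov M (\<lambda>\<omega>. U \<omega> $ l) Y = rcov M (\<lambda>\<omega>. U \<omega> $ l) (\<lambda>\<omega>. eps \<omega> + (\<alpha> + (\<Sum>m\<in>UNIV. \<beta> $ m * V \<omega> $ m)))"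
        by (rule rcov_cong_right) (simp add: eps_lin)
      also have "\<dots> = rcov M (\<lambda>\<omega>. U \<omega> $ l) eps + rcov M (\<lambda>\<omega>. U \<omega> $ l) (\<lambda>\<omega>. \<alpha> + (\<Sum>m\<in>UNIV. \<beta> $ m * V \<omega> $ m))"
        using sU seps sV by (intro rcov_add_right sqi_add sqi_sum sqi_scale) auto
      also have "rcov M (\<lambda>\<omega>. U \<omega> $ l) eps = 0"
        using rcovU[OF seps, of l] Veps[of l] ieps[of l] by simp
      also have "rcov M (\<lambda>\<omega>. U \<omega> $ l) (\<lambda>\<omega>. \<alpha> + (\<Sum>m\<in>UNIV. \<beta> $ m * V \<omega> $ m))
          = (\<Sum>m\<in>UNIV. \<beta> $ m * rcov M (\<lambda>\<omega>. U \<omega> $ l) (\<lambda>\<omega>. V \<omega> $ m))"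
        using sU sV by (subst rcov_lin_right) auto
      also have "\<dots> = (\<Sum>m\<in>UNIV. \<beta> $ m * rcov M (\<lambda>\<omega>. V \<omega> $ l) (\<lambda>\<omega>. V \<omega> $ m))"
        using rcovU[OF sV] iV by simp
      also have "\<dots> = (S *v \<beta>) $ l"
        by (simp add: S_def cov_mat_def matrix_vector_mult_def mult.commute)
      finally show ?thesis by simp
    qed
    define w where "w = (\<chi> l. - (if l \<in> J then dd l * \<beta> $ l else 0))"
    have weq: "S' *v (\<gamma> \<theta> - \<beta>) = w"
    proof -
      have "S' *v \<gamma> \<theta> = S *v \<beta>" using rUY rUY2 by (simp add: vec_eq_iff)
      then have "S' *v (\<gamma> \<theta> - \<beta>) = S *v \<beta> - S' *v \<beta>"
        by (simp add: matrix_vector_mult_diff_distrib)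
      also have "\<dots> = - ((S' - S) *v \<beta>)"
        by (simp add: matrix_vector_mult_diff_rdistrib)
      also have "S' - S = diagm J dd" using S'eq by simp
      finally show ?thesis by (simp add: diagm_mult w_def vec_eq_iff)
    qed
    have j0J: "Inr j0 \<in> J" by (simp add: J_def)
    have wpos: "w $ l \<ge> 0" for l
    proof (cases "l \<in> J")
      case True
      then obtain j where "l = Inr j" by (auto simp: J_def)
      then show ?thesis using True cume_nonneg[rule_format, of j] no_benefit[rule_format, of j]
        by (simp add: w_def dd_def \<beta>_def mult_nonneg_nonpos)
    qed (simp add: w_def)
    have wz: "w $ l = 0" if "l \<notin> J - {Inr j0}" for l
      using that zero by (auto simp: w_def \<beta>_def)
    have "(\<gamma> \<theta> - \<beta>) $ Inr j0 \<le> 0" by (rule neg_prec_final[OF pdS' npS' j0J weq wpos wz])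
    then show ?thesis by (simp add: \<gamma>_def \<beta>_def)
  qed
  show ?thesis using detG main by blast
qed

theorem corollary2:
  fixes M :: "'a measure"
    and Y :: "'a \<Rightarrow> real" and Z :: "'a \<Rightarrow> real^'p" and X W :: "'a \<Rightarrow> real^'d"
    and Ys :: "nat \<Rightarrow> 'a \<Rightarrow> real" and Zs :: "nat \<Rightarrow> 'a \<Rightarrow> real^'p"
    and Xs Ws :: "nat \<Rightarrow> 'a \<Rightarrow> real^'d"
    and \<alpha> :: real and \<beta>Z :: "real^'p" and \<beta>X :: "real^'d"
    and E :: "'a \<Rightarrow> real^'d" and a :: "real^'d" and j0 :: 'd
  assumes P: "prob_space M"
    and meas: "Y \<in> borel_measurable M" "Z \<in> borel_measurable M"
              "X \<in> borel_measurable M" "W \<in> borel_measurable M"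
    and sq: "integrable M (\<lambda>\<omega>. (Y \<omega>)^2)" "\<forall>j. integrable M (\<lambda>\<omega>. (Z \<omega> $ j)^2)"
            "\<forall>j. integrable M (\<lambda>\<omega>. (X \<omega> $ j)^2)" "\<forall>j. integrable M (\<lambda>\<omega>. (W \<omega> $ j)^2)"
    and argmin: "\<forall>a' bZ bX.
        (\<integral>\<omega>. (1/2) * (Y \<omega> - \<alpha> - Z \<omega> \<bullet> \<beta>Z - X \<omega> \<bullet> \<beta>X)^2 \<partial>M)
        \<le> (\<integral>\<omega>. (1/2) * (Y \<omega> - a' - Z \<omega> \<bullet> bZ - X \<omega> \<bullet> bX)^2 \<partial>M)"
    and smeas: "\<forall>i. Ys i \<in> borel_measurable M \<and> Zs i \<in> borel_measurable M \<and>
                    Xs i \<in> borel_measurable M \<and> Ws i \<in> borel_measurable M"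
    and ident: "\<forall>i. distr M borel (\<lambda>\<omega>. (Ys i \<omega>, Zs i \<omega>, Xs i \<omega>, Ws i \<omega>))
                   = distr M borel (\<lambda>\<omega>. (Y \<omega>, Z \<omega>, X \<omega>, W \<omega>))"
    and mom1: "\<forall>f\<in>coord_funs. conv_in_prob M
        (\<lambda>N \<omega>. (\<Sum>i<N. f (Ys i \<omega>, Zs i \<omega>, Xs i \<omega>, Ws i \<omega>)) / real N)
        (\<integral>\<omega>. f (Y \<omega>, Z \<omega>, X \<omega>, W \<omega>) \<partial>M)"
    and mom2: "\<forall>f\<in>coord_funs. \<forall>g\<in>coord_funs. conv_in_prob M
        (\<lambda>N \<omega>. (\<Sum>i<N. f (Ys i \<omega>, Zs i \<omega>, Xs i \<omega>, Ws i \<omega>) * g (Ys i \<omega>, Zs i \<omega>, Xs i \<omega>, Ws i \<omega>)) / real N)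
        (\<integral>\<omega>. f (Y \<omega>, Z \<omega>, X \<omega>, W \<omega>) * g (Y \<omega>, Z \<omega>, X \<omega>, W \<omega>) \<partial>M)"
    and uncorr: "\<forall>i j. rcov M (\<lambda>\<omega>. Ys i \<omega> - \<alpha> - Zs i \<omega> \<bullet> \<beta>Z - Xs i \<omega> \<bullet> \<beta>X)
                              (\<lambda>\<omega>. Ws i \<omega> $ j - Xs i \<omega> $ j) = 0"
    and pdZW: "pos_def_mat (cov_mat M (\<lambda>\<omega>. vcat (Z \<omega>) (W \<omega>)))"
    and pdZX: "pos_def_mat (cov_mat M (\<lambda>\<omega>. vcat (Z \<omega>) (X \<omega>)))"
    and pairwise_PC: "\<forall>j j'. j \<noteq> j' \<longrightarrow>
        partial_corr M (UNIV - {Inr j, Inr j'}) (\<lambda>k \<omega>. vcat (Z \<omega>) (X \<omega>) $ k)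
          (\<lambda>\<omega>. X \<omega> $ j) (\<lambda>\<omega>. X \<omega> $ j') > 0"
    and cume_W: "\<forall>\<omega>\<in>space M. W \<omega> = X \<omega> + E \<omega>"
    and cume_meas: "E \<in> borel_measurable M"
    and cume_indep: "indep_rv M E (\<lambda>\<omega>. (Z \<omega>, X \<omega>, Y \<omega>))"
    and cume_cov: "cov_mat M E = (\<chi> i j. if i = j then a $ i else 0)"
    and cume_nonneg: "\<forall>j. a $ j \<ge> 0"
    and no_benefit: "\<forall>j. \<beta>X $ j \<le> 0"
    and zero: "\<beta>X $ j0 = 0"
  shows "\<exists>b. conv_in_prob M
            (\<lambda>N \<omega>. (\<chi> j. ols_coef (\<lambda>i. vcat (vcat (vec 1 :: real^1) (Zs i \<omega>)) (Ws i \<omega>))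
                                  (\<lambda>i. Ys i \<omega>) N $ Inr j) - \<beta>X) b
          \<and> b $ j0 \<le> 0"
proof -
  interpret prob_space M by (rule P)
  define Gs where "Gs = (\<chi> a b. \<integral>\<omega>. psi a (Y \<omega>, Z \<omega>, X \<omega>, W \<omega>) * psi b (Y \<omega>, Z \<omega>, X \<omega>, W \<omega>) \<partial>M)"
  define rs where "rs = (\<chi> a. \<integral>\<omega>. fst (Y \<omega>, Z \<omega>, X \<omega>, W \<omega>) * psi a (Y \<omega>, Z \<omega>, X \<omega>, W \<omega>) \<partial>M)"
  have popr: "det Gs \<noteq> 0 \<and> (\<forall>\<theta>. Gs *v \<theta> = rs \<longrightarrow> \<theta> $ Inr j0 \<le> \<beta>X $ j0)"
    unfolding Gs_def rs_def
    by (rule pop[OF P meas sq argmin pdZX pairwise_PC cume_W cume_meas cume_indep cume_cov cume_nonneg no_benefit zero])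
  have Dm: "(\<lambda>\<omega>. f (Ys i \<omega>, Zs i \<omega>, Xs i \<omega>, Ws i \<omega>)) \<in> borel_measurable M" if f: "f \<in> coord_funs" for i f
    using f smeas unfolding coord_funs_def by (auto intro: measurable_vec_nth)
  let ?R = "\<lambda>i \<omega>. vcat (vcat (vec 1 :: real^1) (Zs i \<omega>)) (Ws i \<omega>)"
  let ?h = "\<lambda>\<theta>::real^((1 + 'p) + 'd). (\<chi> j. \<theta> $ Inr j) - \<beta>X"
  have Rpsi: "?R i \<omega> $ c = psi c (Ys i \<omega>, Zs i \<omega>, Xs i \<omega>, Ws i \<omega>)" for i \<omega> c
    by (rule R_psi)
  have Rm: "?R i \<in> borel_measurable M" for i
  proof (rule measurable_vec)
    fix c :: "(1 + 'p) + 'd"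
    have "psi c = (\<lambda>_. 1) \<or> psi c \<in> coord_funs" by (rule psi_good)
    then show "(\<lambda>\<omega>. ?R i \<omega> $ c) \<in> borel_measurable M"
      unfolding Rpsi using Dm by auto
  qed
  have ym: "Ys i \<in> borel_measurable M" for i using smeas by blast
  have fstc: "(fst :: real \<times> (real^'p) \<times> (real^'d) \<times> (real^'d) \<Rightarrow> real) \<in> coord_funs" by (simp add: coord_funs_def)
  have GC: "conv_in_prob M (\<lambda>N \<omega>. (\<Sum>i<N. ?R i \<omega> $ c * ?R i \<omega> $ e) / real N) (Gs $ c $ e)" for c e
    unfolding Rpsi Gs_def
    by (simp, rule mom_good[OF P Dm mom1 mom2 psi_good psi_good])
  have rC: "conv_in_prob M (\<lambda>N \<omega>. (\<Sum>i<N. Ys i \<omega> * ?R i \<omega> $ c) / real N) (rs $ c)" for c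
  proof -
    have "conv_in_prob M (\<lambda>N \<omega>. (\<Sum>i<N. fst (Ys i \<omega>, Zs i \<omega>, Xs i \<omega>, Ws i \<omega>) * psi c (Ys i \<omega>, Zs i \<omega>, Xs i \<omega>, Ws i \<omega>)) / real N)
        (\<integral>\<omega>. fst (Y \<omega>, Z \<omega>, X \<omega>, W \<omega>) * psi c (Y \<omega>, Z \<omega>, X \<omega>, W \<omega>) \<partial>M)"
      by (rule mom_good[OF P Dm mom1 mom2 _ psi_good]) (simp_all add: fstc)
    then show ?thesis unfolding Rpsi rs_def by simp
  qed
  have hc: "continuous_on UNIV ?h" by (intro continuous_intros continuous_on_vec_lambda continuous_on_component)
  have conv: "conv_in_prob M (\<lambda>N \<omega>. ?h (ols_coef (\<lambda>i. ?R i \<omega>) (\<lambda>i. Ys i \<omega>) N)) (?h (crf (Gs, rs)))"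
    by (rule ols_plim[OF P Rm ym GC rC _ hc]) (use popr in blast)
  have "Gs *v crf (Gs, rs) = rs" using popr crf_solves by blast
  then have "crf (Gs, rs) $ Inr j0 \<le> \<beta>X $ j0" using popr by blast
  then have "?h (crf (Gs, rs)) $ j0 \<le> 0" by simp
  then show ?thesis using conv by blast
qed

end
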